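(* Concurrent (parallel) accesses to an MS-tree under the locking mechanism described in the context, using the modified deletion strategy described in the context, do not result in violations of streaming consistency.
   Context: Streaming graph: a growing sequence of labelled directed edges with strictly increasing timestamps; under a sliding window edges arrive and expire. For a timing-connected query with timing sequence $\epsilon_1,\dots,\epsilon_k$, the expansion list $L=\{L^1,\dots,L^k\}$ has item $L^i$ storing matches of $\{\epsilon_1,\dots,\epsilon_i\}$, each written in sequential form $\{\sigma_1,\dots,\sigma_i\}$ with $\sigma_j$ matching $\epsilon_j$. The match-store tree (MS-tree) is a trie over these sequential forms: a depth-$i$ node is a data edge matching $\epsilon_i$, the root-to-node path is a match in $L^i$; each node has child pointers and a parent pointer; nodes of equal depth form a doubly linked list. Reading $L^i$: enumerate depth-$i$ nodes via the linked list and backtrack to the root. Inserting a new match $\{\sigma_1,\dots,\sigma_i\}$ (from joining existing $\{\sigma_1,\dots,\sigma_{i-1}\}$ with $\sigma_i$): add $\sigma_i$ as child of node $\sigma_{i-1}$. Modified deletion strategy: when a data edge $\sigma$ matching $\epsilon_{d}$ expires, the deleting thread first "partially" removes each expired node (depth-$d$ nodes containing $\sigma$ and all their descendants), meaning it removes the node from its doubly linked list and disables the pointer from the node's parent to the node while keeping the node's pointer to its parent; after partially removing all expired nodes, it finally removes them completely from the tree. Concurrency: each edge insertion/deletion is a transaction executed by its own thread as a sequence of READ/INSERT/DELETE operations on items $L^j$ (locking $L^j$ means locking all nodes of depth $j$); a single main thread, processing transactions in timestamp order, appends each thread's lock requests (shared or exclusive) to the ends of FIFO wait-lists of the items and then launches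 it; a thread obtains a lock on an item only when its request is at the head of that item's wait-list and the lock is compatible (item free or both shared), holds at most one lock at a time, and releases it after finishing on that item, waking the next requester. Streaming consistency: at each time point the query answers equal those obtained by executing edge insertions/deletions serially in chronological timestamp order. *)

theory Defs
  imports Main
begin

text \<open>A timing-connected query with timing sequence eps_1..eps_k is represented by
  k (number of query edges), a predicate matches sigma i ("data edge sigma matches eps_i")
  and a predicate join_ok m sigma ("the sequential form m @ [sigma] is a match of
  eps_1..eps_i when m is a match of eps_1..eps_(i-1)").
  A stream is given as the chronologically ordered list of edge insertions/deletions.\<close>

datatype 'e txn = Ins 'e | Del 'e

definition L_init :: "nat \<Rightarrow> 'e list set" where
  "L_init = (\<lambda>i. if i = 0 then {[]} else {})"

fun ser_step :: "nat \<Rightarrow> ('e \<Rightarrow> nat \<Rightarrow> bool) \<Rightarrow> ('e list \<Rightarrow> 'e \<Rightarrow> bool)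
    \<Rightarrow> (nat \<Rightarrow> 'e list set) \<Rightarrow> 'e txn \<Rightarrow> (nat \<Rightarrow> 'e list set)" where
  "ser_step k matches join_ok L (Ins \<sigma>) =
     foldl (\<lambda>L' i. L'(i := L' i \<union> {m @ [\<sigma>] | m. m \<in> L' (i - 1) \<and> join_ok m \<sigma>}))
           L (filter (matches \<sigma>) [1..<Suc k])"
| "ser_step k matches join_ok L (Del \<sigma>) =
     (\<lambda>i. if i = 0 then L i else {m \<in> L i. \<sigma> \<notin> set m})"

definition ser_L :: "nat \<Rightarrow> ('e \<Rightarrow> nat \<Rightarrow> bool) \<Rightarrow> ('e list \<Rightarrow> 'e \<Rightarrow> bool)
    \<Rightarrow> 'e txn list \<Rightarrow> nat \<Rightarrow> (nat \<Rightarrow> 'e list set)" where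
  "ser_L k matches join_ok txs t = foldl (ser_step k matches join_ok) L_init (take t txs)"

text \<open>Node identifiers: the root, or a node created by transaction (thread) t at depth i
  under parent p. Identifiers are never reused. The doubly
  linked list of depth-i nodes is represented by the set lst i of its members.\<close>

datatype nid = Root | Nd nat nat nid

record 'e node =
  ned :: 'e
  npar :: nid

text \<open>Backtracking from a depth-j node to the root along parent pointers; None if a
  pointer leads to a node that no longer exists (memory was freed).\<close>

fun bt :: "nat \<Rightarrow> (nid \<Rightarrow> 'e node option) \<Rightarrow> nid \<Rightarrow> 'e list option" where
  "bt 0 T n = (if n = Root then Some [] else None)"
| "bt (Suc j) T n = (case T n of None \<Rightarrow> None
                    | Some nd \<Rightarrow> map_option (\<lambda>p. p @ [ned nd]) (bt j T (npar nd)))"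

datatype mode = Sh | Ex

datatype op = ORead nat | OInsert nat | ODelete nat | OFree

fun op_lock :: "op \<Rightarrow> (nat \<times> mode) option" where
  "op_lock (ORead j) = Some (j, Sh)"
| "op_lock (OInsert j) = Some (j, Ex)"
| "op_lock (ODelete j) = Some (j, Ex)"
| "op_lock OFree = None"

text \<open>Insertion of sigma: for each i with sigma matching eps_i (increasing i):
  READ L^(i-1) (skipped for i = 1, L^0 being the root), then INSERT L^i.\<close>
definition ins_ops :: "nat \<Rightarrow> ('e \<Rightarrow> nat \<Rightarrow> bool) \<Rightarrow> 'e \<Rightarrow> op list" where
  "ins_ops k matches \<sigma> =
     concat (map (\<lambda>i. (if i = 1 then [] else [ORead (i - 1)]) @ [OInsert i])
                 (filter (matches \<sigma>) [1..<Suc k]))"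

text \<open>Deletion of sigma: DELETE L^d, ..., L^k (partial removal), where d is the least level
  matched by sigma, then the final complete removal (OFree, no lock).\<close>
definition del_ops :: "nat \<Rightarrow> ('e \<Rightarrow> nat \<Rightarrow> bool) \<Rightarrow> 'e \<Rightarrow> op list" where
  "del_ops k matches \<sigma> =
     (if \<exists>d. 1 \<le> d \<and> d \<le> k \<and> matches \<sigma> d
      then map ODelete [(LEAST d. 1 \<le> d \<and> d \<le> k \<and> matches \<sigma> d)..<Suc k] @ [OFree]
      else [])"

fun txn_ops :: "nat \<Rightarrow> ('e \<Rightarrow> nat \<Rightarrow> bool) \<Rightarrow> 'e txn \<Rightarrow> op list" where
  "txn_ops k matches (Ins \<sigma>) = ins_ops k matches \<sigma>"
| "txn_ops k matches (Del \<sigma>) = del_ops k matches \<sigma>"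

fun txn_edge :: "'e txn \<Rightarrow> 'e" where
  "txn_edge (Ins \<sigma>) = \<sigma>"
| "txn_edge (Del \<sigma>) = \<sigma>"

record 'e thr =
  tedge :: 'e
  tops :: "op list"                      \<comment> \<open>remaining operations\<close>
  trd :: "(nid \<times> 'e list option) set"   \<comment> \<open>result of the last READ\<close>
  tE :: "nid set"                        \<comment> \<open>nodes partially removed so far\<close>
  tadd :: "'e list set"                  \<comment> \<open>answers (matches in L^k) added\<close>
  trem :: "'e list option set"           \<comment> \<open>answers removed from L^k\<close>

record 'e conf =
  tree :: "nid \<Rightarrow> 'e node option"
  lst :: "nat \<Rightarrow> nid set"
  wl :: "nat \<Rightarrow> (nat \<times> mode) list"      \<comment> \<open>FIFO wait-list of item L^j\<close>
  hold :: "nat \<Rightarrow> (nat \<times> mode) set"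
  nlaunch :: nat                         \<comment> \<open>main thread: next transaction to launch\<close>
  thr :: "nat \<Rightarrow> 'e thr option"

definition conf_init :: "'e conf" where
  "conf_init = \<lparr>tree = (\<lambda>_. None), lst = (\<lambda>_. {}), wl = (\<lambda>_. []), hold = (\<lambda>_. {}),
                nlaunch = 0, thr = (\<lambda>_. None)\<rparr>"

definition compat :: "mode \<Rightarrow> (nat \<times> mode) set \<Rightarrow> bool" where
  "compat m H \<longleftrightarrow> H = {} \<or> (m = Sh \<and> (\<forall>(t', m') \<in> H. m' = Sh))"

text \<open>Effect of thread t executing its next operation (atomically, while it holds the
  lock on the operation's item).\<close>
definition do_op :: "nat \<Rightarrow> ('e list \<Rightarrow> 'e \<Rightarrow> bool) \<Rightarrow> nat \<Rightarrow> 'e thr \<Rightarrow> 'e conf \<Rightarrow> 'e conf" where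
  "do_op k join_ok t s c =
    (case tops s of [] \<Rightarrow> c
     | op # rest \<Rightarrow>
       (let \<sigma> = tedge s in
        case op of
          ORead j \<Rightarrow>
            c\<lparr>thr := (thr c)(t \<mapsto> s\<lparr>tops := rest,
                 trd := {(n, bt j (tree c) n) | n. n \<in> lst c j}\<rparr>)\<rparr>
        | OInsert i \<Rightarrow>
            (let src = (if i = 1 then {(Root, Some [])} else trd s);
                 new = {(p, m). (p, Some m) \<in> src \<and> join_ok m \<sigma>}
             in c\<lparr>tree := (\<lambda>n. case n of
                              Nd t' i' p \<Rightarrow> (if t' = t \<and> i' = i \<and> (\<exists>m. (p, m) \<in> new)
                                             then Some \<lparr>ned = \<sigma>, npar = p\<rparr> else tree c n)
                            | Root \<Rightarrow> tree c n),
                  lst := (lst c)(i := lst c i \<union> {Nd t i p | p m. (p, m) \<in> new}),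
                  thr := (thr c)(t \<mapsto> s\<lparr>tops := rest,
                     tadd := tadd s \<union> (if i = k then {m @ [\<sigma>] | p m. (p, m) \<in> new} else {})\<rparr>)\<rparr>)
        | ODelete j \<Rightarrow>
            (let R = {n \<in> lst c j. case tree c n of None \<Rightarrow> False
                        | Some nd \<Rightarrow> ned nd = \<sigma> \<or> npar nd \<in> tE s}
             in c\<lparr>lst := (lst c)(j := lst c j - R),
                  thr := (thr c)(t \<mapsto> s\<lparr>tops := rest, tE := tE s \<union> R,
                     trem := trem s \<union> (if j = k then bt k (tree c) ` R else {})\<rparr>)\<rparr>)
        | OFree \<Rightarrow>
            c\<lparr>tree := (\<lambda>n. if n \<in> tE s then None else tree c n),
              thr := (thr c)(t \<mapsto> s\<lparr>tops := rest\<rparr>)\<rparr>))"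

definition init_thr :: "'e \<Rightarrow> op list \<Rightarrow> 'e thr" where
  "init_thr \<sigma> ops = \<lparr>tedge = \<sigma>, tops = ops, trd = {}, tE = {}, tadd = {}, trem = {}\<rparr>"

inductive cstep :: "nat \<Rightarrow> ('e \<Rightarrow> nat \<Rightarrow> bool) \<Rightarrow> ('e list \<Rightarrow> 'e \<Rightarrow> bool) \<Rightarrow> 'e txn list
                    \<Rightarrow> 'e conf \<Rightarrow> 'e conf \<Rightarrow> bool"
  for k matches join_ok txs where
  launch: "\<lbrakk> nlaunch c < length txs;
             ops = txn_ops k matches (txs ! nlaunch c);
             reqs = List.map_filter op_lock ops \<rbrakk> \<Longrightarrow>
           cstep k matches join_ok txs c
             (c\<lparr>nlaunch := Suc (nlaunch c),
                wl := (\<lambda>j. wl c j @ map (\<lambda>(j', m). (nlaunch c, m)) (filter (\<lambda>(j', m). j' = j) reqs)),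
                thr := (thr c)(nlaunch c \<mapsto> init_thr (txn_edge (txs ! nlaunch c)) ops)\<rparr>)"
| grant: "\<lbrakk> thr c t = Some s; tops s = op # rest; op_lock op = Some (j, m);
            wl c j = (t, m) # w; \<forall>j' m'. (t, m') \<notin> hold c j'; compat m (hold c j) \<rbrakk> \<Longrightarrow>
          cstep k matches join_ok txs c
            (c\<lparr>wl := (wl c)(j := w), hold := (hold c)(j := insert (t, m) (hold c j))\<rparr>)"
| exec: "\<lbrakk> thr c t = Some s; tops s = op # rest; op_lock op = Some (j, m);
           (t, m) \<in> hold c j \<rbrakk> \<Longrightarrow>
         cstep k matches join_ok txs c
           ((do_op k join_ok t s c)\<lparr>hold := (hold c)(j := hold c j - {(t, m)})\<rparr>)"
| free: "\<lbrakk> thr c t = Some s; tops s = OFree # rest \<rbrakk> \<Longrightarrow>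
         cstep k matches join_ok txs c (do_op k join_ok t s c)"

definition txn_done :: "'e conf \<Rightarrow> nat \<Rightarrow> bool" where
  "txn_done c i \<longleftrightarrow> (\<exists>s. thr c i = Some s \<and> tops s = [])"

definition conc_answers :: "'e conf \<Rightarrow> nat \<Rightarrow> 'e list option set" where
  "conc_answers c t =
     foldl (\<lambda>A i. case thr c i of None \<Rightarrow> A | Some s \<Rightarrow> (A - trem s) \<union> Some ` tadd s) {} [0..<t]"

definition streaming_consistent ::
  "nat \<Rightarrow> ('e \<Rightarrow> nat \<Rightarrow> bool) \<Rightarrow> ('e list \<Rightarrow> 'e \<Rightarrow> bool) \<Rightarrow> 'e txn list \<Rightarrow> 'e conf \<Rightarrow> bool" where
  "streaming_consistent k matches join_ok txs c \<longleftrightarrow>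
     (\<forall>t \<le> length txs. (\<forall>i < t. txn_done c i) \<longrightarrow>
        conc_answers c t = Some ` ser_L k matches join_ok txs t k)"

end

theory Submission
  imports Defs
begin

fun parof :: "nid \<Rightarrow> nid" where
  "parof (Nd t i p) = p" | "parof Root = Root"
fun lvl :: "nid \<Rightarrow> nat" where
  "lvl (Nd t i p) = i" | "lvl Root = 0"
fun ancs :: "nid \<Rightarrow> nid set" where
  "ancs Root = {}" | "ancs (Nd t i p) = insert (Nd t i p) (ancs p)"

locale ctx =
  fixes k :: nat and matches :: "'e \<Rightarrow> nat \<Rightarrow> bool" and join_ok :: "'e list \<Rightarrow> 'e \<Rightarrow> bool"
    and txs :: "'e txn list"
begin

definition ops :: "nat \<Rightarrow> op list" where "ops t = txn_ops k matches (txs ! t)"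
definition sg :: "nat \<Rightarrow> 'e" where "sg t = txn_edge (txs ! t)"
definition hasd :: "'e \<Rightarrow> bool" where "hasd \<sigma> \<longleftrightarrow> (\<exists>d. 1 \<le> d \<and> d \<le> k \<and> matches \<sigma> d)"
definition gd :: "'e \<Rightarrow> nat" where "gd \<sigma> = (LEAST d. 1 \<le> d \<and> d \<le> k \<and> matches \<sigma> d)"

lemma gd: "hasd \<sigma> \<Longrightarrow> 1 \<le> gd \<sigma> \<and> gd \<sigma> \<le> k \<and> matches \<sigma> (gd \<sigma>)"
  unfolding hasd_def gd_def by (rule LeastI_ex)

lemma gd_le: "1 \<le> d \<Longrightarrow> d \<le> k \<Longrightarrow> matches \<sigma> d \<Longrightarrow> gd \<sigma> \<le> d"
  unfolding gd_def by (rule Least_le) auto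

lemma set_ins_ops: "set (ins_ops k matches \<sigma>) =
   (\<Union>i \<in> {i. matches \<sigma> i \<and> 1 \<le> i \<and> i \<le> k}. if i = 1 then {OInsert i} else {ORead (i-1), OInsert i})"
proof -
  have g: "\<And>i. set ((if i = 1 then [] else [ORead (i - 1)]) @ [OInsert i]) = (if i = 1 then {OInsert i} else {ORead (i-1), OInsert i})"
    by auto
  have f: "set (filter (matches \<sigma>) [1..<Suc k]) = {i. matches \<sigma> i \<and> 1 \<le> i \<and> i \<le> k}"
    by auto
  show ?thesis unfolding ins_ops_def set_concat set_map image_image g f by simp
qed

lemma mem_ins_ops:
  "OInsert i \<in> set (ins_ops k matches \<sigma>) \<longleftrightarrow> matches \<sigma> i \<and> 1 \<le> i \<and> i \<le> k"
  "ORead l \<in> set (ins_ops k matches \<sigma>) \<longleftrightarrow> matches \<sigma> (Suc l) \<and> 1 \<le> l \<and> Suc l \<le> k"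
  "ODelete j \<notin> set (ins_ops k matches \<sigma>)"
  "OFree \<notin> set (ins_ops k matches \<sigma>)"
  unfolding set_ins_ops
     apply (force split: if_splits)
    apply (rule iffI)
     apply (force split: if_splits)
    apply (rule UN_I[of "Suc l"]) apply simp apply simp
   apply (force split: if_splits)
  apply (force split: if_splits)
  done

lemma mem_del_ops:
  "ODelete j \<in> set (del_ops k matches \<sigma>) \<longleftrightarrow> hasd \<sigma> \<and> gd \<sigma> \<le> j \<and> j \<le> k"
  "OFree \<in> set (del_ops k matches \<sigma>) \<longleftrightarrow> hasd \<sigma>"
  "OInsert i \<notin> set (del_ops k matches \<sigma>)"
  "ORead l \<notin> set (del_ops k matches \<sigma>)"
  unfolding del_ops_def hasd_def[symmetric] gd_def[symmetric]
  by (auto simp: hasd_def)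

fun key :: "op \<Rightarrow> nat" where
  "key (ORead l) = 2*l+1" | "key (OInsert i) = 2*i" | "key (ODelete j) = 2*j" | "key OFree = 2*k+2"

lemma sorted_concat_blocks:
  assumes "sorted_wrt (<) ns" "\<forall>i\<in>set ns. 1 \<le> i"
  shows "sorted_wrt (\<lambda>a b. key a < key b)
     (concat (map (\<lambda>i. (if i = 1 then [] else [ORead (i - 1)]) @ [OInsert i]) ns))"
  using assms
proof (induction ns)
  case Nil then show ?case by simp
next
  case (Cons i ns)
  have blk: "\<forall>x\<in>set ((if i = 1 then [] else [ORead (i - 1)]) @ [OInsert i]). key x \<le> 2*i"
    using Cons.prems by auto
  have rest: "\<forall>y\<in>set (concat (map (\<lambda>i. (if i = 1 then [] else [ORead (i - 1)]) @ [OInsert i]) ns)). 2*i < key y"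
  proof
    fix y assume "y \<in> set (concat (map (\<lambda>i. (if i = 1 then [] else [ORead (i - 1)]) @ [OInsert i]) ns))"
    then obtain i' where "i' \<in> set ns" "y \<in> set ((if i' = 1 then [] else [ORead (i' - 1)]) @ [OInsert i'])" by auto
    moreover have "i < i'" using Cons.prems \<open>i' \<in> set ns\<close> by auto
    ultimately show "2*i < key y" by (auto split: if_splits)
  qed
  have s1: "sorted_wrt (\<lambda>a b. key a < key b) ((if i = 1 then [] else [ORead (i - 1)]) @ [OInsert i])"
    using Cons.prems by auto
  show ?case using Cons s1 blk rest
    by (auto simp: sorted_wrt_append intro: le_less_trans)
qed

lemma sorted_ins_ops: "sorted_wrt (\<lambda>a b. key a < key b) (ins_ops k matches \<sigma>)"
  unfolding ins_ops_def
  apply (rule sorted_concat_blocks)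
   apply (rule sorted_wrt_filter, rule sorted_wrt_upt)
  apply auto
  done

lemma sorted_del_ops: "sorted_wrt (\<lambda>a b. key a < key b) (del_ops k matches \<sigma>)"
  unfolding del_ops_def
  by (auto simp: sorted_wrt_append sorted_wrt_map sorted_wrt_upt less_Suc_eq_le intro: sorted_wrt_mono_rel[of _ "(<)"])

lemma sorted_ops: "sorted_wrt (\<lambda>a b. key a < key b) (ops t)"
  unfolding ops_def by (cases "txs ! t") (auto simp: sorted_ins_ops sorted_del_ops)

lemma sorted_key_distinct: "sorted_wrt (\<lambda>a b. key a < key b) xs \<Longrightarrow> distinct xs"
  by (induction xs) auto

lemma distinct_ops: "distinct (ops t)"
  using sorted_ops by (rule sorted_key_distinct)


lemma ops_Ins: "txs ! t = Ins \<sigma> \<Longrightarrow> ops t = ins_ops k matches \<sigma> \<and> sg t = \<sigma>"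
  by (simp add: ops_def sg_def)
lemma ops_Del: "txs ! t = Del \<sigma> \<Longrightarrow> ops t = del_ops k matches \<sigma> \<and> sg t = \<sigma>"
  by (simp add: ops_def sg_def)

lemma OInsert_ops: "OInsert i \<in> set (ops t) \<Longrightarrow> txs ! t = Ins (sg t) \<and> matches (sg t) i \<and> 1 \<le> i \<and> i \<le> k"
  by (cases "txs ! t") (auto simp: ops_def sg_def mem_ins_ops mem_del_ops)
lemma OInsert_ops_iff: "txs ! t = Ins \<sigma> \<Longrightarrow> OInsert i \<in> set (ops t) \<longleftrightarrow> matches \<sigma> i \<and> 1 \<le> i \<and> i \<le> k"
  by (auto simp: ops_def mem_ins_ops)
lemma ORead_ops_iff: "txs ! t = Ins \<sigma> \<Longrightarrow> ORead l \<in> set (ops t) \<longleftrightarrow> matches \<sigma> (Suc l) \<and> 1 \<le> l \<and> Suc l \<le> k"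
  by (auto simp: ops_def mem_ins_ops)
lemma ODelete_ops: "ODelete j \<in> set (ops t) \<Longrightarrow> txs ! t = Del (sg t) \<and> hasd (sg t) \<and> gd (sg t) \<le> j \<and> j \<le> k"
  by (cases "txs ! t") (auto simp: ops_def sg_def mem_ins_ops mem_del_ops)
lemma ODelete_ops_iff: "txs ! t = Del \<sigma> \<Longrightarrow> ODelete j \<in> set (ops t) \<longleftrightarrow> hasd \<sigma> \<and> gd \<sigma> \<le> j \<and> j \<le> k"
  by (auto simp: ops_def mem_del_ops)
lemma OFree_ops: "OFree \<in> set (ops t) \<Longrightarrow> txs ! t = Del (sg t) \<and> hasd (sg t)"
  by (cases "txs ! t") (auto simp: ops_def sg_def mem_ins_ops mem_del_ops)
lemma OFree_ops_iff: "txs ! t = Del \<sigma> \<Longrightarrow> OFree \<in> set (ops t) \<longleftrightarrow> hasd \<sigma>"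
  by (auto simp: ops_def mem_del_ops)
lemma ORead_ops: "ORead l \<in> set (ops t) \<Longrightarrow> txs ! t = Ins (sg t) \<and> matches (sg t) (Suc l) \<and> 1 \<le> l \<and> Suc l \<le> k"
  by (cases "txs ! t") (auto simp: ops_def sg_def mem_ins_ops mem_del_ops)

section \<open>Serial id-level semantics\<close>

fun nedof :: "nid \<Rightarrow> 'e" where "nedof (Nd t i p) = sg t" | "nedof Root = undefined"
fun idpath :: "nid \<Rightarrow> 'e list" where "idpath Root = []" | "idpath (Nd t i p) = idpath p @ [sg t]"

primrec insL :: "nat \<Rightarrow> (nat \<Rightarrow> nid set) \<Rightarrow> nat \<Rightarrow> nid set" where
  "insL t L 0 = L 0"
| "insL t L (Suc i) = L (Suc i) \<union> (if matches (sg t) (Suc i) \<and> Suc i \<le> k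
      then {Nd t (Suc i) p | p. p \<in> insL t L i \<and> join_ok (idpath p) (sg t)} else {})"

definition dRj :: "'e \<Rightarrow> (nat \<Rightarrow> nid set) \<Rightarrow> nat \<Rightarrow> nid set \<Rightarrow> nid set" where
  "dRj \<sigma> L j E = (if hasd \<sigma> \<and> gd \<sigma> \<le> j \<and> j \<le> k then {n \<in> L j. nedof n = \<sigma> \<or> parof n \<in> E} else {})"
primrec dE :: "'e \<Rightarrow> (nat \<Rightarrow> nid set) \<Rightarrow> nat \<Rightarrow> nid set" where
  "dE \<sigma> L 0 = {}" | "dE \<sigma> L (Suc j) = dE \<sigma> L j \<union> dRj \<sigma> L (Suc j) (dE \<sigma> L j)"
definition dR :: "'e \<Rightarrow> (nat \<Rightarrow> nid set) \<Rightarrow> nat \<Rightarrow> nid set" where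
  "dR \<sigma> L j = dRj \<sigma> L j (dE \<sigma> L (j - 1))"

definition sstep :: "nat \<Rightarrow> (nat \<Rightarrow> nid set) \<Rightarrow> nat \<Rightarrow> nid set" where
  "sstep t L = (case txs ! t of Ins \<sigma> \<Rightarrow> insL t L | Del \<sigma> \<Rightarrow> (\<lambda>j. L j - dR \<sigma> L j))"

primrec LS :: "nat \<Rightarrow> nat \<Rightarrow> nid set" where
  "LS 0 = (\<lambda>i. if i = 0 then {Root} else {})"
| "LS (Suc n) = (if n < length txs then sstep n (LS n) else LS n)"

definition NEWP :: "nat \<Rightarrow> nat \<Rightarrow> nid set" where
  "NEWP t i = {p \<in> LS (Suc t) (i - 1). join_ok (idpath p) (sg t)}"
definition DR :: "nat \<Rightarrow> nat \<Rightarrow> nid set" where "DR X j = dR (sg X) (LS X) j"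
definition DE :: "nat \<Rightarrow> nat \<Rightarrow> nid set" where "DE X j = dE (sg X) (LS X) j"

lemma dE_Suc: "dE \<sigma> L (Suc j) = dE \<sigma> L j \<union> dR \<sigma> L (Suc j)"
  by (simp add: dR_def)

lemma dR_0: "dR \<sigma> L 0 = {}"
  using gd[of \<sigma>] by (auto simp: dR_def dRj_def)

lemma dR_sub: "dR \<sigma> L j \<subseteq> L j"
  by (auto simp: dR_def dRj_def)

lemma dR_guard: "a \<in> dR \<sigma> L j \<Longrightarrow> hasd \<sigma> \<and> gd \<sigma> \<le> j \<and> j \<le> k"
  by (auto simp: dR_def dRj_def split: if_splits)

lemma dE_char: "a \<in> dE \<sigma> L j \<longleftrightarrow> (\<exists>l. 1 \<le> l \<and> l \<le> j \<and> a \<in> dR \<sigma> L l)"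
proof (induction j)
  case 0 then show ?case by simp
next
  case (Suc j) show ?case
    unfolding dE_Suc Un_iff Suc.IH by (auto simp: le_Suc_eq)
qed

lemma insL_mono: "L i \<subseteq> insL t L i"
  by (cases i) auto

lemma LS_0: "LS n 0 = {Root}"
  by (induction n) (auto simp: sstep_def dR_0 split: txn.splits)

lemma LS_Suc_Ins: "t < length txs \<Longrightarrow> txs ! t = Ins \<sigma> \<Longrightarrow> LS (Suc t) = insL t (LS t)"
  by (simp add: sstep_def)

lemma LS_Suc_Del: "t < length txs \<Longrightarrow> txs ! t = Del \<sigma> \<Longrightarrow> LS (Suc t) = (\<lambda>j. LS t j - DR t j)"
  by (simp add: sstep_def DR_def sg_def)

lemma LS_Suc_out: "length txs \<le> t \<Longrightarrow> LS (Suc t) = LS t"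
  by simp

lemma LS_node:
  "a \<in> LS n i \<Longrightarrow> 1 \<le> i \<Longrightarrow> \<exists>t p. a = Nd t i p \<and> t < n \<and> t < length txs \<and> OInsert i \<in> set (ops t)
      \<and> p \<in> NEWP t i \<and> p \<in> LS n (i - 1)"
proof (induction n arbitrary: a i)
  case 0 then show ?case by simp
next
  case (Suc n)
  show ?case
  proof (cases "n < length txs")
    case False
    then show ?thesis using Suc by (fastforce simp: LS_Suc_out)
  next
    case True
    show ?thesis
    proof (cases "txs ! n")
      case (Ins \<sigma>)
      have LSn: "LS (Suc n) = insL n (LS n)" using LS_Suc_Ins[OF True Ins] .
      obtain i' where i': "i = Suc i'" using Suc.prems by (cases i) auto
      have sgn: "sg n = \<sigma>" using Ins by (simp add: sg_def)
      from Suc.prems(1) LSn i' consider (old) "a \<in> LS n i"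
        | (new) p where "a = Nd n i p" "p \<in> insL n (LS n) i'" "join_ok (idpath p) \<sigma>" "matches \<sigma> i" "i \<le> k"
        by (auto simp: sgn split: if_splits)
      then show ?thesis
      proof cases
        case old
        then obtain t p where tp: "a = Nd t i p" "t < n" "t < length txs" "OInsert i \<in> set (ops t)"
          "p \<in> NEWP t i" "p \<in> LS n (i - 1)" using Suc.IH Suc.prems by blast
        have "p \<in> LS (Suc n) (i - 1)" using tp(6) insL_mono[of "LS n" "i - 1" n] LSn by auto
        then show ?thesis using tp by auto
      next
        case new
        have "OInsert i \<in> set (ops n)" using new Ins Suc.prems(2) by (simp add: OInsert_ops_iff)
        moreover have "p \<in> LS (Suc n) (i - 1)" using new LSn i' by simp
        ultimately show ?thesis using new True by (auto simp: NEWP_def sgn)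
      qed
    next
      case (Del \<sigma>)
      have LSn: "LS (Suc n) = (\<lambda>j. LS n j - DR n j)" using LS_Suc_Del[OF True Del] .
      have sgn: "sg n = \<sigma>" using Del by (simp add: sg_def)
      from Suc.prems(1) LSn have a1: "a \<in> LS n i" "a \<notin> DR n i" by auto
      then obtain t p where tp: "a = Nd t i p" "t < n" "t < length txs" "OInsert i \<in> set (ops t)"
          "p \<in> NEWP t i" "p \<in> LS n (i - 1)" using Suc.IH Suc.prems by blast
      have "p \<notin> DR n (i - 1)"
      proof
        assume pd: "p \<in> DR n (i - 1)"
        then have g: "hasd \<sigma> \<and> gd \<sigma> \<le> i - 1 \<and> i - 1 \<le> k" using dR_guard by (auto simp: DR_def sgn)
        have ik: "i \<le> k" using OInsert_ops[OF tp(4)] by simp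
        have "i - 1 \<ge> 1" using pd by (cases "i - 1") (auto simp: DR_def dR_0)
        then have "p \<in> dE \<sigma> (LS n) (i - 1)" using pd by (auto simp: dE_char DR_def sgn)
        then have "a \<in> DR n i" using g ik tp(1) a1(1) \<open>i - 1 \<ge> 1\<close>
          by (auto simp: DR_def dR_def dRj_def sgn)
        then show False using a1 by simp
      qed
      then show ?thesis using tp LSn by auto
    qed
  qed
qed


lemma LS_le_k: "a \<in> LS n i \<Longrightarrow> 1 \<le> i \<Longrightarrow> i \<le> k"
  using LS_node OInsert_ops by blast

lemma LS_lvl: "a \<in> LS n i \<Longrightarrow> lvl a = i"
proof (cases "i = 0")
  case True then show "a \<in> LS n i \<Longrightarrow> lvl a = i" by (simp add: LS_0)
next
  case False then show "a \<in> LS n i \<Longrightarrow> lvl a = i" using LS_node[of a n i] by auto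
qed

lemma LS_new: "a \<in> LS (Suc m) i \<Longrightarrow> a \<notin> LS m i \<Longrightarrow> \<exists>p. a = Nd m i p"
proof -
  assume a: "a \<in> LS (Suc m) i" "a \<notin> LS m i"
  show ?thesis
  proof (cases "m < length txs")
    case False then show ?thesis using a by simp
  next
    case True
    show ?thesis
    proof (cases "txs ! m")
      case (Ins \<sigma>)
      then have "LS (Suc m) i = insL m (LS m) i" using LS_Suc_Ins[OF True] by simp
      then show ?thesis using a by (cases i) (auto split: if_splits)
    next
      case (Del \<sigma>)
      then show ?thesis using a LS_Suc_Del[OF True Del] by simp
    qed
  qed
qed

lemma LS_persist: assumes "Nd t i p \<notin> LS m i" "t < m" "m \<le> m'" shows "Nd t i p \<notin> LS m' i"
  using assms(3)
proof (induction m' rule: dec_induct)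
  case base then show ?case using assms by simp
next
  case (step n)
  show ?case
  proof
    assume "Nd t i p \<in> LS (Suc n) i"
    then obtain q where "Nd t i p = Nd n i q" using LS_new step by blast
    then show False using step assms by simp
  qed
qed

lemma ancs_LS: "x \<in> LS M l \<Longrightarrow> a \<in> ancs x \<Longrightarrow> 1 \<le> lvl a \<and> lvl a \<le> l \<and> a \<in> LS M (lvl a)"
proof (induction x arbitrary: l)
  case Root then show ?case by simp
next
  case (Nd t i p)
  have li: "l = i" using LS_lvl[OF Nd.prems(1)] by simp
  have l1: "1 \<le> l" using Nd.prems(1) by (cases l) (auto simp: LS_0)
  obtain t' p' where tp: "Nd t i p = Nd t' l p'" "p' \<in> LS M (l - 1)"
    using LS_node[OF Nd.prems(1) l1] by blast
  show ?case
  proof (cases "a = Nd t i p")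
    case True then show ?thesis using li l1 Nd.prems by simp
  next
    case False
    then have "a \<in> ancs p" using Nd.prems by simp
    then show ?thesis using Nd.IH[of "l - 1"] tp by auto
  qed
qed

lemma dR_lvl: "a \<in> dR \<sigma> (LS n) l \<Longrightarrow> lvl a = l"
  using dR_sub LS_lvl by blast

lemma DE_lvl: "a \<in> DE X j \<Longrightarrow> a \<in> DR X (lvl a) \<and> 1 \<le> lvl a \<and> lvl a \<le> j"
  unfolding DE_def DR_def dE_char using dR_lvl by blast

lemma path_has: "a \<in> LS n i \<Longrightarrow> 1 \<le> i \<Longrightarrow> \<sigma> \<in> set (idpath a) \<Longrightarrow> hasd \<sigma> \<and> gd \<sigma> \<le> i"
proof (induction i arbitrary: a)
  case 0 then show ?case by simp
next
  case (Suc i)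
  obtain t p where tp: "a = Nd t (Suc i) p" "OInsert (Suc i) \<in> set (ops t)" "p \<in> LS n i"
    using LS_node[OF Suc.prems(1)] by auto
  have m: "matches (sg t) (Suc i) \<and> Suc i \<le> k" using OInsert_ops[OF tp(2)] by simp
  from Suc.prems(3) tp(1) have "\<sigma> = sg t \<or> \<sigma> \<in> set (idpath p)" by auto
  then show ?case
  proof
    assume "\<sigma> = sg t"
    then show ?thesis using m gd_le[of "Suc i" \<sigma>] by (auto simp: hasd_def)
  next
    assume h: "\<sigma> \<in> set (idpath p)"
    have "i \<noteq> 0"
    proof
      assume "i = 0"
      then have "p = Root" using tp(3) by (simp add: LS_0)
      then show False using h by simp
    qed
    then show ?thesis using Suc.IH[OF tp(3) _ h] by auto
  qed
qed

lemma dR_char: "a \<in> dR \<sigma> (LS n) i \<longleftrightarrow> (1 \<le> i \<and> a \<in> LS n i \<and> \<sigma> \<in> set (idpath a))"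
proof (induction i arbitrary: a)
  case 0 then show ?case by (simp add: dR_0)
next
  case (Suc i)
  show ?case
  proof (cases "a \<in> LS n (Suc i)")
    case False then show ?thesis using dR_sub by blast
  next
    case True
    obtain t p where tp: "a = Nd t (Suc i) p" "p \<in> LS n i"
      using LS_node[OF True] by auto
    have pe: "p \<in> dE \<sigma> (LS n) i \<longleftrightarrow> \<sigma> \<in> set (idpath p)"
    proof (cases "i = 0")
      case True then show ?thesis using tp(2) by (simp add: LS_0)
    next
      case False
      have "p \<in> dE \<sigma> (LS n) i \<longleftrightarrow> p \<in> dR \<sigma> (LS n) i"
        unfolding dE_char using False dR_lvl LS_lvl[OF tp(2)] by (metis le_refl less_one not_less)
      then show ?thesis using Suc.IH[of p] tp(2) False by simp
    qed
    show ?thesis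
    proof (cases "hasd \<sigma> \<and> gd \<sigma> \<le> Suc i \<and> Suc i \<le> k")
      case g: True
      have "a \<in> dR \<sigma> (LS n) (Suc i) \<longleftrightarrow> nedof a = \<sigma> \<or> parof a \<in> dE \<sigma> (LS n) i"
        using g True by (simp add: dR_def dRj_def)
      then show ?thesis using pe tp True by auto
    next
      case g: False
      have "a \<notin> dR \<sigma> (LS n) (Suc i)" using g dR_guard by blast
      moreover have "\<sigma> \<notin> set (idpath a)"
        using g path_has[OF True] LS_le_k[OF True] by auto
      ultimately show ?thesis by simp
    qed
  qed
qed

lemma DR_char: "a \<in> DR X i \<longleftrightarrow> (1 \<le> i \<and> a \<in> LS X i \<and> sg X \<in> set (idpath a))"
  unfolding DR_def by (rule dR_char)

section \<open>Correspondence with ser_L\<close>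

primrec insS :: "'e \<Rightarrow> (nat \<Rightarrow> 'e list set) \<Rightarrow> nat \<Rightarrow> 'e list set" where
  "insS \<sigma> L 0 = L 0"
| "insS \<sigma> L (Suc i) = L (Suc i) \<union> (if matches \<sigma> (Suc i) \<and> Suc i \<le> k
      then {m @ [\<sigma>] | m. m \<in> insS \<sigma> L i \<and> join_ok m \<sigma>} else {})"

lemma fold_ins:
  assumes "m \<le> k"
  shows "foldl (\<lambda>L' i. L'(i := L' i \<union> {x @ [\<sigma>] | x. x \<in> L' (i - 1) \<and> join_ok x \<sigma>}))
           L (filter (matches \<sigma>) [1..<Suc m]) = (\<lambda>i. if i \<le> m then insS \<sigma> L i else L i)"
  using assms
proof (induction m)
  case 0 show ?case
  proof
    fix i show "foldl (\<lambda>L' i. L'(i := L' i \<union> {x @ [\<sigma>] | x. x \<in> L' (i - 1) \<and> join_ok x \<sigma>}))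
           L (filter (matches \<sigma>) [1..<Suc 0]) i = (if i \<le> 0 then insS \<sigma> L i else L i)"
      by (cases i) auto
  qed
next
  case (Suc m)
  define F :: "(nat \<Rightarrow> 'e list set) \<Rightarrow> nat \<Rightarrow> nat \<Rightarrow> 'e list set" where "F = (\<lambda>L' i. L'(i := L' i \<union> {x @ [\<sigma>] | x. x \<in> (L' (i - 1) :: 'e list set) \<and> join_ok x \<sigma>}))"
  define G where "G = (\<lambda>i. if i \<le> m then insS \<sigma> L i else L i)"
  have IH: "foldl F L (filter (matches \<sigma>) [1..<Suc m]) = G"
    unfolding F_def G_def using Suc.prems by (intro Suc.IH) simp
  have e: "[1..<Suc (Suc m)] = [1..<Suc m] @ [Suc m]" by simp
  have "foldl F L (filter (matches \<sigma>) [1..<Suc (Suc m)]) = foldl F G (filter (matches \<sigma>) [Suc m])"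
    by (simp only: e filter_append foldl_append IH)
  also have "\<dots> = (\<lambda>i. if i \<le> Suc m then insS \<sigma> L i else L i)"
  proof (cases "matches \<sigma> (Suc m)")
    case True
    have "foldl F G (filter (matches \<sigma>) [Suc m]) = F G (Suc m)" using True by simp
    also have "\<dots> = (\<lambda>i. if i \<le> Suc m then insS \<sigma> L i else L i)"
    proof
      fix i show "F G (Suc m) i = (if i \<le> Suc m then insS \<sigma> L i else L i)"
        using True Suc.prems by (auto simp: F_def G_def le_Suc_eq)
    qed
    finally show ?thesis .
  next
    case False
    have "foldl F G (filter (matches \<sigma>) [Suc m]) = G" using False by simp
    also have "\<dots> = (\<lambda>i. if i \<le> Suc m then insS \<sigma> L i else L i)"
    proof
      fix i show "G i = (if i \<le> Suc m then insS \<sigma> L i else L i)"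
        using False by (auto simp: G_def le_Suc_eq)
    qed
    finally show ?thesis .
  qed
  finally show ?case unfolding F_def .
qed

lemma ser_step_Ins: "ser_step k matches join_ok L (Ins \<sigma>) = insS \<sigma> L"
proof -
  have "ser_step k matches join_ok L (Ins \<sigma>) = (\<lambda>i. if i \<le> k then insS \<sigma> L i else L i)"
    using fold_ins[of k \<sigma> L] by simp
  also have "\<dots> = insS \<sigma> L"
  proof
    fix i show "(if i \<le> k then insS \<sigma> L i else L i) = insS \<sigma> L i"
      by (cases i) auto
  qed
  finally show ?thesis .
qed

lemma img_new: "idpath ` {Nd t j p | p. p \<in> A \<and> join_ok (idpath p) \<sigma>'} = {m @ [sg t] | m. m \<in> idpath ` A \<and> join_ok m \<sigma>'}"
  by (auto simp: image_def)

lemma insS_insL: "insS (sg t) (\<lambda>i. idpath ` L i) i = idpath ` insL t L i"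
proof (induction i)
  case 0 then show ?case by simp
next
  case (Suc i) then show ?case by (simp add: image_Un img_new)
qed

lemma ser_L_LS: "ser_L k matches join_ok txs n = (\<lambda>i. idpath ` LS n i)"
proof (induction n)
  case 0 show ?case
  proof
    fix i show "ser_L k matches join_ok txs 0 i = idpath ` LS 0 i"
      by (cases i) (auto simp: ser_L_def L_init_def)
  qed
next
  case (Suc n)
  show ?case
  proof (cases "n < length txs")
    case False
    then show ?thesis using Suc by (simp add: ser_L_def)
  next
    case True
    have "ser_L k matches join_ok txs (Suc n) = ser_step k matches join_ok (ser_L k matches join_ok txs n) (txs ! n)"
      using True by (simp add: ser_L_def take_Suc_conv_app_nth)
    also have "\<dots> = (\<lambda>i. idpath ` LS (Suc n) i)"
    proof (cases "txs ! n")
      case (Ins \<sigma>)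
      have sgn: "sg n = \<sigma>" using Ins by (simp add: sg_def)
      have "ser_step k matches join_ok (ser_L k matches join_ok txs n) (txs ! n) = insS \<sigma> (\<lambda>i. idpath ` LS n i)"
        by (simp only: Suc.IH Ins ser_step_Ins)
      also have "\<dots> = (\<lambda>i. idpath ` insL n (LS n) i)"
        using insS_insL[of n "LS n"] sgn by auto
      also have "\<dots> = (\<lambda>i. idpath ` LS (Suc n) i)" using LS_Suc_Ins[OF True Ins] by simp
      finally show ?thesis .
    next
      case (Del \<sigma>)
      have sgn: "sg n = \<sigma>" using Del by (simp add: sg_def)
      show ?thesis
      proof
        fix i
        show "ser_step k matches join_ok (ser_L k matches join_ok txs n) (txs ! n) i = idpath ` LS (Suc n) i"
        proof (cases "i = 0")
          case True then show ?thesis using Suc Del by (simp del: LS.simps add: LS_0)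
        next
          case False
          then show ?thesis using Suc Del LS_Suc_Del[OF True Del] DR_char[of _ n i] sgn
            by auto
        qed
      qed
    qed
    finally show ?thesis .
  qed
qed

end

lemma set_map_filter: "set (List.map_filter f xs) = {y. \<exists>x \<in> set xs. f x = Some y}"
  by (induction xs) (auto split: option.splits)

lemma sorted_map_filter:
  "sorted_wrt R xs \<Longrightarrow> (\<And>x y z w. x \<in> set xs \<Longrightarrow> y \<in> set xs \<Longrightarrow> R x y \<Longrightarrow> f x = Some z \<Longrightarrow> f y = Some w \<Longrightarrow> Q z w)
   \<Longrightarrow> sorted_wrt Q (List.map_filter f xs)"
proof (induction xs)
  case Nil then show ?case by simp
next
  case (Cons x xs)
  show ?case
  proof (cases "f x")
    case None
    have "sorted_wrt Q (List.map_filter f xs)"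
      apply (rule Cons.IH)
      using Cons.prems by auto
    then show ?thesis using None by simp
  next
    case (Some z)
    have "sorted_wrt Q (List.map_filter f xs)"
      apply (rule Cons.IH)
      using Cons.prems by auto
    moreover have "\<forall>w \<in> set (List.map_filter f xs). Q z w"
    proof
      fix w assume "w \<in> set (List.map_filter f xs)"
      then obtain y where y: "y \<in> set xs" "f y = Some w" by (auto simp: set_map_filter)
      have "R x y" using Cons.prems(1) y(1) by simp
      then show "Q z w" using Cons.prems(2)[of x y z w] y Some by simp
    qed
    ultimately show ?thesis using Some by simp
  qed
qed

fun bef :: "nat \<times> mode \<Rightarrow> nat \<times> mode \<Rightarrow> bool" where
  "bef (t, m) (t', m') = (t < t' \<or> (t = t' \<and> m = Ex \<and> m' = Sh))"

lemma bef_irrefl: "\<not> bef r r"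
  by (cases r) auto

lemma drop_sorted_after:
  assumes "sorted_wrt (\<lambda>a b. key' a < (key' b :: nat)) xs" "a \<in> set (drop p xs)" "b \<in> set xs" "key' a < key' b"
  shows "b \<in> set (drop p xs)"
proof (rule ccontr)
  assume nb: "b \<notin> set (drop p xs)"
  have "set xs = set (take p xs) \<union> set (drop p xs)"
    by (metis append_take_drop_id set_append)
  then have bt: "b \<in> set (take p xs)" using assms(3) nb by blast
  have "sorted_wrt (\<lambda>a b. key' a < key' b) (take p xs @ drop p xs)" using assms(1) by simp
  then have "\<forall>x\<in>set (take p xs). \<forall>y\<in>set (drop p xs). key' x < key' y"
    unfolding sorted_wrt_append by blast
  then have "key' b < key' a" using bt assms(2) by blast
  then show False using assms(4) by simp
qed

context ctx
begin

definition dop :: "'e conf \<Rightarrow> nat \<Rightarrow> op \<Rightarrow> bool" where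
  "dop c t oo \<longleftrightarrow> t < nlaunch c \<and> oo \<in> set (ops t) \<and> oo \<notin> set (tops (the (thr c t)))"
definition wdone :: "'e conf \<Rightarrow> nat \<Rightarrow> nat \<Rightarrow> bool" where
  "wdone c t j \<longleftrightarrow> dop c t (OInsert j) \<or> dop c t (ODelete j)"
definition wr :: "nat \<Rightarrow> nat \<Rightarrow> bool" where
  "wr t j \<longleftrightarrow> t < length txs \<and> (OInsert j \<in> set (ops t) \<or> ODelete j \<in> set (ops t))"
definition reqop :: "nat \<Rightarrow> nat \<Rightarrow> mode \<Rightarrow> op" where
  "reqop t j m = (case m of Sh \<Rightarrow> ORead j | Ex \<Rightarrow> (case txs ! t of Ins _ \<Rightarrow> OInsert j | Del _ \<Rightarrow> ODelete j))"
definition reqs :: "nat \<Rightarrow> nat \<Rightarrow> (nat \<times> mode) list" where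
  "reqs t j = map (\<lambda>(j', m). (t, m)) (filter (\<lambda>(j', m). j' = j) (List.map_filter op_lock (ops t)))"
definition REQ :: "nat \<Rightarrow> nat \<Rightarrow> (nat \<times> mode) list" where
  "REQ j n = concat (map (\<lambda>t. reqs t j) [0..<n])"
definition granted :: "'e conf \<Rightarrow> nat \<Rightarrow> nat \<times> mode \<Rightarrow> bool" where
  "granted c j r \<longleftrightarrow> dop c (fst r) (reqop (fst r) j (snd r)) \<or> r \<in> hold c j"

lemma lock_reqop: "oo \<in> set (ops t) \<Longrightarrow> (op_lock oo = Some (j, m)) = (oo = reqop t j m)"
proof (cases oo)
  case (ORead l)
  then show "oo \<in> set (ops t) \<Longrightarrow> ?thesis" by (cases m) (auto simp: reqop_def split: txn.splits)
next
  case (OInsert i)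
  assume "oo \<in> set (ops t)"
  then have "txs ! t = Ins (sg t)" using OInsert OInsert_ops by simp
  then show ?thesis using OInsert by (cases m) (auto simp: reqop_def)
next
  case (ODelete i)
  assume "oo \<in> set (ops t)"
  then have "txs ! t = Del (sg t)" using ODelete ODelete_ops by simp
  then show ?thesis using ODelete by (cases m) (auto simp: reqop_def)
next
  case OFree
  then show ?thesis by (cases m) (auto simp: reqop_def split: txn.splits)
qed

lemma reqop_lock: "reqop t j m \<in> set (ops t) \<Longrightarrow> op_lock (reqop t j m) = Some (j, m)"
  using lock_reqop by blast

lemma reqop_ne_OFree: "reqop t j m \<noteq> OFree"
  by (auto simp: reqop_def split: mode.splits txn.splits)

lemma set_reqs: "set (reqs t j) = {(t, m) | m. reqop t j m \<in> set (ops t)}"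
proof -
  have "set (reqs t j) = {(t, m) | m. \<exists>oo \<in> set (ops t). op_lock oo = Some (j, m)}"
    unfolding reqs_def set_map set_filter set_map_filter
    apply (rule set_eqI)
    apply (simp add: image_iff)
    apply blast
    done
  also have "\<dots> = {(t, m) | m. reqop t j m \<in> set (ops t)}"
  proof -
    have "(\<exists>oo\<in>set (ops t). op_lock oo = Some (j, m)) \<longleftrightarrow> reqop t j m \<in> set (ops t)" for m
    proof
      assume "\<exists>oo\<in>set (ops t). op_lock oo = Some (j, m)"
      then obtain oo where "oo \<in> set (ops t)" "op_lock oo = Some (j, m)" by blast
      then show "reqop t j m \<in> set (ops t)" using lock_reqop[of oo t j m] by simp
    next
      assume r: "reqop t j m \<in> set (ops t)"
      then have "op_lock (reqop t j m) = Some (j, m)" using lock_reqop[of "reqop t j m" t j m] by simp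
      then show "\<exists>oo\<in>set (ops t). op_lock oo = Some (j, m)" using r by blast
    qed
    then show ?thesis by simp
  qed
  finally show ?thesis .
qed

lemma sorted_reqs: "sorted_wrt bef (reqs t j)"
proof -
  have s1: "sorted_wrt (\<lambda>(j1, m1) (j2, m2). j1 = j2 \<longrightarrow> m1 = Ex \<and> m2 = Sh) (List.map_filter op_lock (ops t))"
  proof (rule sorted_map_filter[OF sorted_ops])
    fix x y z w
    assume "key x < key y" "op_lock x = Some z" "op_lock y = Some w"
    then show "(\<lambda>(j1, m1) (j2, m2). j1 = j2 \<longrightarrow> m1 = Ex \<and> m2 = Sh) z w"
      by (cases x; cases y) auto
  qed
  have s2: "sorted_wrt (\<lambda>(j1, m1) (j2, m2). j1 = j2 \<longrightarrow> m1 = Ex \<and> m2 = Sh)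
     (filter (\<lambda>(j', m). j' = j) (List.map_filter op_lock (ops t)))"
    by (rule sorted_wrt_filter[OF s1])
  have s3: "sorted_wrt (\<lambda>a b. bef ((\<lambda>(j', m). (t, m)) a) ((\<lambda>(j', m). (t, m)) b))
     (filter (\<lambda>(j', m). j' = j) (List.map_filter op_lock (ops t)))"
    by (rule sorted_wrt_mono_rel[OF _ s2]) auto
  show ?thesis unfolding reqs_def sorted_wrt_map using s3 .
qed

lemma set_REQ: "set (REQ j n) = {(t, m). t < n \<and> reqop t j m \<in> set (ops t)}"
  unfolding REQ_def by (auto simp: set_reqs)

lemma REQ_Suc: "REQ j (Suc n) = REQ j n @ reqs n j"
  by (simp add: REQ_def)

lemma sorted_REQ: "sorted_wrt bef (REQ j n)"
proof (induction n)
  case 0 then show ?case by (simp add: REQ_def)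
next
  case (Suc n)
  show ?case unfolding REQ_Suc sorted_wrt_append
    using Suc sorted_reqs by (auto simp: set_REQ set_reqs)
qed

lemma sorted_bef_distinct: "sorted_wrt bef xs \<Longrightarrow> distinct xs"
  by (induction xs) (auto simp: bef_irrefl)

lemma distinct_REQ: "distinct (REQ j n)"
  using sorted_REQ by (rule sorted_bef_distinct)

end

lemma sorted_wrt_drop': "sorted_wrt R xs \<Longrightarrow> sorted_wrt R (drop n xs)"
proof -
  assume "sorted_wrt R xs"
  then have "sorted_wrt R (take n xs @ drop n xs)" by simp
  then show ?thesis unfolding sorted_wrt_append by blast
qed

context ctx
begin

declare LS.simps(2)[simp del]

definition inv_thr :: "'e conf \<Rightarrow> bool" where
  "inv_thr c \<longleftrightarrow> nlaunch c \<le> length txs \<and> (\<forall>t. (thr c t = None) = (nlaunch c \<le> t))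
     \<and> (\<forall>t s. thr c t = Some s \<longrightarrow> tedge s = sg t \<and> (\<exists>p. tops s = drop p (ops t)))"

definition inv_lock :: "'e conf \<Rightarrow> bool" where
  "inv_lock c \<longleftrightarrow> (\<forall>j. wl c j = filter (\<lambda>r. \<not> granted c j r) (REQ j (nlaunch c)))
   \<and> (\<forall>j r r'. r \<in> set (REQ j (nlaunch c)) \<longrightarrow> r' \<in> set (REQ j (nlaunch c)) \<longrightarrow> bef r r'
        \<longrightarrow> granted c j r' \<longrightarrow> granted c j r)
   \<and> (\<forall>j t m t' m'. (t, m) \<in> set (REQ j (nlaunch c)) \<longrightarrow> (t', m') \<in> set (REQ j (nlaunch c))
        \<longrightarrow> bef (t, m) (t', m') \<longrightarrow> granted c j (t', m') \<longrightarrow> (m = Ex \<or> m' = Ex) \<longrightarrow> dop c t (reqop t j m))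
   \<and> (\<forall>j t m. (t, m) \<in> hold c j \<longrightarrow> (\<exists>s rest. thr c t = Some s \<and> tops s = reqop t j m # rest))"

definition created :: "'e conf \<Rightarrow> nid \<Rightarrow> bool" where
  "created c n \<longleftrightarrow> (\<exists>t i p. n = Nd t i p \<and> dop c t (OInsert i) \<and> p \<in> NEWP t i)"
definition freed :: "'e conf \<Rightarrow> nid \<Rightarrow> bool" where
  "freed c n \<longleftrightarrow> (\<exists>X. dop c X OFree \<and> n \<in> DE X k)"
definition nodeof :: "nid \<Rightarrow> 'e node" where
  "nodeof n = \<lparr>ned = nedof n, npar = parof n\<rparr>"
definition RD :: "nat \<Rightarrow> nat \<Rightarrow> (nid \<times> 'e list option) set" where
  "RD t l = {(n, Some (idpath n)) | n. n \<in> LS (Suc t) l}"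
definition TADD :: "nat \<Rightarrow> 'e list set" where
  "TADD t = {idpath p @ [sg t] | p. p \<in> NEWP t k}"

definition thread_ok :: "'e conf \<Rightarrow> nat \<Rightarrow> 'e thr \<Rightarrow> bool" where
  "thread_ok c t s \<longleftrightarrow> (case txs ! t of
     Ins \<sigma> \<Rightarrow> tE s = {} \<and> trem s = {} \<and> tadd s = (if dop c t (OInsert k) then TADD t else {})
        \<and> (\<forall>i rest. tops s = OInsert i # rest \<longrightarrow> i \<noteq> 1 \<longrightarrow> trd s = RD t (i - 1))
   | Del \<sigma> \<Rightarrow> tadd s = {} \<and> tE s = (\<Union>{DR t j | j. dop c t (ODelete j)})
        \<and> trem s = (if dop c t (ODelete k) then Some ` idpath ` DR t k else {}))"

definition inv_data :: "'e conf \<Rightarrow> bool" where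
  "inv_data c \<longleftrightarrow> (\<forall>j. 1 \<le> j \<longrightarrow> (\<exists>N \<le> nlaunch c. lst c j = LS N j \<and> (\<forall>t. wr t j \<longrightarrow> (t < N \<longleftrightarrow> wdone c t j))))
   \<and> (\<forall>n. tree c n = (if created c n \<and> \<not> freed c n then Some (nodeof n) else None))
   \<and> (\<forall>t i p. created c (Nd t i p) \<longrightarrow> 2 \<le> i \<longrightarrow> created c p)
   \<and> (\<forall>t s. thr c t = Some s \<longrightarrow> thread_ok c t s)"

definition Inv :: "'e conf \<Rightarrow> bool" where
  "Inv c \<longleftrightarrow> inv_thr c \<and> inv_lock c \<and> inv_data c"

lemma thr_lt: "inv_thr c \<Longrightarrow> thr c t = Some s \<Longrightarrow> t < nlaunch c"
  unfolding inv_thr_def by (metis not_le option.distinct(1))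

lemma thr_some: "inv_thr c \<Longrightarrow> t < nlaunch c \<Longrightarrow> \<exists>s. thr c t = Some s"
  unfolding inv_thr_def by (metis not_le not_None_eq)

lemma thr_drop: "inv_thr c \<Longrightarrow> thr c t = Some s \<Longrightarrow> \<exists>p. tops s = drop p (ops t)"
  unfolding inv_thr_def by blast

lemma thr_edge: "inv_thr c \<Longrightarrow> thr c t = Some s \<Longrightarrow> tedge s = sg t"
  unfolding inv_thr_def by blast

lemma dop_iff: "inv_thr c \<Longrightarrow> thr c t = Some s \<Longrightarrow> dop c t oo \<longleftrightarrow> oo \<in> set (ops t) \<and> oo \<notin> set (tops s)"
  unfolding dop_def using thr_lt by auto

lemma dop_lt: "dop c t oo \<Longrightarrow> t < nlaunch c \<and> oo \<in> set (ops t)"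
  unfolding dop_def by simp

lemma sorted_tops: "inv_thr c \<Longrightarrow> thr c t = Some s \<Longrightarrow> sorted_wrt (\<lambda>a b. key a < key b) (tops s)"
  using thr_drop sorted_ops sorted_wrt_drop' by metis

lemma tops_sub: "inv_thr c \<Longrightarrow> thr c t = Some s \<Longrightarrow> set (tops s) \<subseteq> set (ops t)"
  using thr_drop set_drop_subset by metis

lemma next_facts: "inv_thr c \<Longrightarrow> thr c t = Some s \<Longrightarrow> tops s = oo # rest \<Longrightarrow>
   oo \<in> set (ops t) \<and> oo \<notin> set rest \<and> set rest \<subseteq> set (ops t)"
proof -
  assume a: "inv_thr c" "thr c t = Some s" "tops s = oo # rest"
  have "sorted_wrt (\<lambda>a b. key a < key b) (oo # rest)" using sorted_tops[OF a(1,2)] a(3) by simp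
  then have "oo \<notin> set rest" by auto
  then show ?thesis using tops_sub[OF a(1,2)] a(3) by auto
qed

lemma not_dop_next: "inv_thr c \<Longrightarrow> thr c t = Some s \<Longrightarrow> tops s = oo # rest \<Longrightarrow> \<not> dop c t oo"
  using dop_iff by fastforce

lemma dop_before: "inv_thr c \<Longrightarrow> thr c t = Some s \<Longrightarrow> tops s = oo # rest \<Longrightarrow> a \<in> set (ops t)
   \<Longrightarrow> key a < key oo \<Longrightarrow> dop c t a"
proof -
  assume a: "inv_thr c" "thr c t = Some s" "tops s = oo # rest" "a \<in> set (ops t)" "key a < key oo"
  have "sorted_wrt (\<lambda>a b. key a < key b) (oo # rest)" using sorted_tops[OF a(1,2)] a(3) by simp
  then have "a \<notin> set (tops s)" using a(3,5) by auto
  then show ?thesis using dop_iff[OF a(1,2)] a(4) by simp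
qed

lemma not_dop_after: "inv_thr c \<Longrightarrow> thr c t = Some s \<Longrightarrow> tops s = oo # rest \<Longrightarrow> b \<in> set (ops t)
   \<Longrightarrow> key oo < key b \<Longrightarrow> \<not> dop c t b"
proof -
  assume a: "inv_thr c" "thr c t = Some s" "tops s = oo # rest" "b \<in> set (ops t)" "key oo < key b"
  obtain p where p: "tops s = drop p (ops t)" using thr_drop[OF a(1,2)] by blast
  have "oo \<in> set (drop p (ops t))" using a(3) p by (metis list.set_intros(1))
  then have "b \<in> set (drop p (ops t))" using drop_sorted_after[OF sorted_ops _ a(4) a(5)] by blast
  then show ?thesis using dop_iff[OF a(1,2)] p by simp
qed

lemma dop_before2: "inv_thr c \<Longrightarrow> dop c t b \<Longrightarrow> a \<in> set (ops t) \<Longrightarrow> key a < key b \<Longrightarrow> dop c t a"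
proof -
  assume a: "inv_thr c" "dop c t b" "a \<in> set (ops t)" "key a < key b"
  obtain s where s: "thr c t = Some s" using thr_some[OF a(1)] dop_lt[OF a(2)] by blast
  obtain p where p: "tops s = drop p (ops t)" using thr_drop[OF a(1) s] by blast
  have nb: "b \<notin> set (tops s)" using dop_iff[OF a(1) s] a(2) by simp
  have "a \<notin> set (tops s)"
  proof
    assume "a \<in> set (tops s)"
    then have "b \<in> set (drop p (ops t))"
      using drop_sorted_after[OF sorted_ops[of t], of a p b] p dop_lt[OF a(2)] a(4) by simp
    then show False using nb p by simp
  qed
  then show ?thesis using dop_iff[OF a(1) s] a(3) by simp
qed

lemma wdone_reqop: "wdone c t j \<longleftrightarrow> dop c t (reqop t j Ex)"
proof (cases "txs ! t")
  case (Ins \<sigma>)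
  have "\<not> dop c t (ODelete j)" using dop_lt ODelete_ops Ins by fastforce
  then show ?thesis using Ins by (simp add: wdone_def reqop_def)
next
  case (Del \<sigma>)
  have "\<not> dop c t (OInsert j)" using dop_lt OInsert_ops Del by fastforce
  then show ?thesis using Del by (simp add: wdone_def reqop_def)
qed

lemma wr_reqop: "wr t j \<longleftrightarrow> t < length txs \<and> reqop t j Ex \<in> set (ops t)"
proof (cases "txs ! t")
  case (Ins \<sigma>)
  have "ODelete j \<notin> set (ops t)" using ODelete_ops Ins by fastforce
  then show ?thesis using Ins by (auto simp: wr_def reqop_def)
next
  case (Del \<sigma>)
  have "OInsert j \<notin> set (ops t)" using OInsert_ops Del by fastforce
  then show ?thesis using Del by (auto simp: wr_def reqop_def)
qed

lemma order_O1:
  assumes "inv_lock c" "t < t'" "reqop t j m \<in> set (ops t)" "reqop t' j m' \<in> set (ops t')"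
    "t' < nlaunch c" "m = Ex \<or> m' = Ex" "granted c j (t', m')"
  shows "dop c t (reqop t j m)"
proof -
  have "(t, m) \<in> set (REQ j (nlaunch c))" "(t', m') \<in> set (REQ j (nlaunch c))"
    using assms by (auto simp: set_REQ)
  moreover have "bef (t, m) (t', m')" using assms(2) by simp
  ultimately show ?thesis using assms(1,6,7) unfolding inv_lock_def by blast
qed

lemma LS_nonwr: "1 \<le> j \<Longrightarrow> \<not> wr t j \<Longrightarrow> LS (Suc t) j = LS t j"
proof -
  assume j: "1 \<le> j" and nw: "\<not> wr t j"
  show ?thesis
  proof (cases "t < length txs")
    case False then show ?thesis by (simp add: LS_Suc_out)
  next
    case True
    show ?thesis
    proof (cases "txs ! t")
      case (Ins \<sigma>)
      have ni: "OInsert j \<notin> set (ops t)" using nw True by (simp add: wr_def)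
      then have "\<not> (matches \<sigma> j \<and> j \<le> k)" using OInsert_ops_iff[OF Ins] j by simp
      moreover have "sg t = \<sigma>" using Ins by (simp add: sg_def)
      moreover obtain j' where "j = Suc j'" using j by (cases j) auto
      ultimately show ?thesis using LS_Suc_Ins[OF True Ins] by auto
    next
      case (Del \<sigma>)
      have nd: "ODelete j \<notin> set (ops t)" using nw True by (simp add: wr_def)
      have "DR t j = {}"
      proof (rule ccontr)
        assume "DR t j \<noteq> {}"
        then obtain a where "a \<in> DR t j" by blast
        then have "hasd (sg t) \<and> gd (sg t) \<le> j \<and> j \<le> k" using dR_guard by (auto simp: DR_def)
        then show False using nd ODelete_ops_iff[OF Del] Del by (simp add: sg_def)
      qed
      then show ?thesis using LS_Suc_Del[OF True Del] by simp
    qed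
  qed
qed

lemma LS_eq_aux: "1 \<le> j \<Longrightarrow> N \<le> N' \<Longrightarrow> (\<forall>t. wr t j \<longrightarrow> (t < N \<longleftrightarrow> t < N')) \<Longrightarrow> LS N j = LS N' j"
proof -
  assume j: "1 \<le> j" and le: "N \<le> N'" and w: "\<forall>t. wr t j \<longrightarrow> (t < N \<longleftrightarrow> t < N')"
  have "\<forall>m. N \<le> m \<longrightarrow> m \<le> N' \<longrightarrow> LS m j = LS N j"
  proof (intro allI impI)
    fix m assume "N \<le> m" "m \<le> N'"
    then show "LS m j = LS N j"
    proof (induction m rule: dec_induct)
      case base then show ?case by simp
    next
      case (step m)
      have "\<not> wr m j" using w step by auto
      then show ?case using LS_nonwr[OF j] step by simp
    qed
  qed
  then have "LS N' j = LS N j" using le by blast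
  then show ?thesis by simp
qed

lemma LS_eq: assumes j: "1 \<le> j" and w: "\<forall>t. wr t j \<longrightarrow> (t < N \<longleftrightarrow> t < N')" shows "LS N j = LS N' j"
proof (cases "N \<le> N'")
  case True show ?thesis using LS_eq_aux[OF j True w] by simp
next
  case False
  then have le: "N' \<le> N" by simp
  have w': "\<forall>t. wr t j \<longrightarrow> (t < N' \<longleftrightarrow> t < N)" using w by blast
  show ?thesis using LS_eq_aux[OF j le w'] by simp
qed

lemma D1_view: "inv_data c \<Longrightarrow> 1 \<le> j \<Longrightarrow> (\<forall>t'. wr t' j \<longrightarrow> (wdone c t' j \<longleftrightarrow> t' < M)) \<Longrightarrow> lst c j = LS M j"
proof -
  assume d: "inv_data c" and j: "1 \<le> j" and w: "\<forall>t'. wr t' j \<longrightarrow> (wdone c t' j \<longleftrightarrow> t' < M)"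
  obtain N where N: "lst c j = LS N j" "\<forall>t. wr t j \<longrightarrow> (t < N \<longleftrightarrow> wdone c t j)"
    using d j unfolding inv_data_def by blast
  have "LS N j = LS M j" using LS_eq[OF j] N(2) w by blast
  then show ?thesis using N(1) by simp
qed

lemma wview:
  assumes inv: "Inv c" and s: "thr c t = Some s" and top: "tops s = reqop t j Ex # rest" and h: "(t, Ex) \<in> hold c j"
  shows "\<forall>t'. wr t' j \<longrightarrow> (wdone c t' j \<longleftrightarrow> t' < t)"
proof (intro allI impI)
  fix t' assume w: "wr t' j"
  have it: "inv_thr c" and il: "inv_lock c" using inv by (auto simp: Inv_def)
  have tl: "t < nlaunch c" using thr_lt[OF it s] .
  have rt: "reqop t j Ex \<in> set (ops t)" using next_facts[OF it s top] by simp
  have rt': "reqop t' j Ex \<in> set (ops t')" using w wr_reqop by simp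
  have gt: "granted c j (t, Ex)" using h by (simp add: granted_def)
  have nd: "\<not> dop c t (reqop t j Ex)" using not_dop_next[OF it s top] .
  show "wdone c t' j \<longleftrightarrow> t' < t"
  proof (cases "t' < t")
    case True
    then have "dop c t' (reqop t' j Ex)" using order_O1[OF il True rt' rt tl _ gt] by simp
    then show ?thesis using True wdone_reqop by simp
  next
    case False
    show ?thesis
    proof (cases "t' = t")
      case True then show ?thesis using nd wdone_reqop by simp
    next
      case ne: False
      have "\<not> wdone c t' j"
      proof
        assume "wdone c t' j"
        then have dt: "dop c t' (reqop t' j Ex)" using wdone_reqop by simp
        then have "granted c j (t', Ex)" by (simp add: granted_def)
        moreover have "t < t'" using False ne by simp
        ultimately have "dop c t (reqop t j Ex)" using order_O1[OF il _ rt rt' _ _] dop_lt[OF dt] by simp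
        then show False using nd by simp
      qed
      then show ?thesis using False by simp
    qed
  qed
qed

lemma reqop_Sh: "reqop t j Sh = ORead j"
  by (simp add: reqop_def)

lemma rview:
  assumes inv: "Inv c" and s: "thr c t = Some s" and top: "tops s = ORead l # rest" and h: "(t, Sh) \<in> hold c l"
  shows "\<forall>t'. wr t' l \<longrightarrow> (wdone c t' l \<longleftrightarrow> t' < Suc t)"
proof (intro allI impI)
  fix t' assume w: "wr t' l"
  have it: "inv_thr c" and il: "inv_lock c" using inv by (auto simp: Inv_def)
  have tl: "t < nlaunch c" using thr_lt[OF it s] .
  have rt: "reqop t l Sh \<in> set (ops t)" using next_facts[OF it s top] by (simp add: reqop_Sh)
  have insT: "txs ! t = Ins (sg t)" using ORead_ops rt by (simp add: reqop_Sh)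
  have rt': "reqop t' l Ex \<in> set (ops t')" using w wr_reqop by simp
  have gt: "granted c j (t, Sh) \<longleftrightarrow> dop c t (ORead j) \<or> (t, Sh) \<in> hold c j" for j
    by (simp add: granted_def reqop_Sh)
  have nd: "\<not> dop c t (ORead l)" using not_dop_next[OF it s top] .
  show "wdone c t' l \<longleftrightarrow> t' < Suc t"
  proof (cases "t' < t")
    case True
    then have "dop c t' (reqop t' l Ex)" using order_O1[OF il True rt' rt tl _ ] gt h by simp
    then show ?thesis using True wdone_reqop by simp
  next
    case False
    show ?thesis
    proof (cases "t' = t")
      case True
      have "reqop t l Ex = OInsert l" using insT by (simp add: reqop_def)
      then have "dop c t (reqop t l Ex)" using dop_before[OF it s top] rt' True by simp
      then show ?thesis using True wdone_reqop by simp
    next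
      case ne: False
      have "\<not> wdone c t' l"
      proof
        assume "wdone c t' l"
        then have dt: "dop c t' (reqop t' l Ex)" using wdone_reqop by simp
        then have "granted c l (t', Ex)" by (simp add: granted_def)
        moreover have "t < t'" using False ne by simp
        ultimately have "dop c t (reqop t l Sh)" using order_O1[OF il _ rt rt' _ _] dop_lt[OF dt] by simp
        then show False using nd by (simp add: reqop_Sh)
      qed
      then show ?thesis using False ne by simp
    qed
  qed
qed

end

context ctx
begin

lemma anc_created: "inv_data c \<Longrightarrow> created c x \<Longrightarrow> a \<in> ancs x \<Longrightarrow> created c a"
proof (induction x)
  case Root then show ?case by simp
next
  case (Nd t i p)
  show ?case
  proof (cases "a = Nd t i p")
    case True then show ?thesis using Nd by simp
  next
    case False
    then have ap: "a \<in> ancs p" using Nd.prems by simp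
    from Nd.prems(2) have d: "dop c t (OInsert i)" "p \<in> NEWP t i" by (auto simp: created_def)
    have i1: "1 \<le> i" using OInsert_ops dop_lt[OF d(1)] by blast
    show ?thesis
    proof (cases "2 \<le> i")
      case True
      then have "created c p" using Nd.prems(1,2) unfolding inv_data_def by blast
      then show ?thesis using Nd.IH Nd.prems(1) ap by blast
    next
      case False
      then have "i = 1" using i1 by simp
      then have "p = Root" using d(2) by (simp add: NEWP_def LS_0)
      then show ?thesis using ap by simp
    qed
  qed
qed

lemma pres:
  assumes inv: "Inv c" and x: "x \<in> LS M l" and l1: "1 \<le> l"
    and wd: "\<forall>t'. wr t' l \<longrightarrow> t' < M \<longrightarrow> wdone c t' l"
    and nf: "\<forall>X. M \<le> X \<longrightarrow> ODelete l \<in> set (ops X) \<longrightarrow> \<not> dop c X (ODelete l)"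
  shows "\<forall>a \<in> ancs x. tree c a = Some (nodeof a)"
proof
  fix a assume a: "a \<in> ancs x"
  have it: "inv_thr c" and id: "inv_data c" using inv by (auto simp: Inv_def)
  obtain t p where tp: "x = Nd t l p" "t < M" "t < length txs" "OInsert l \<in> set (ops t)" "p \<in> NEWP t l"
    using LS_node[OF x l1] by blast
  have "wr t l" using tp by (simp add: wr_def)
  then have "wdone c t l" using wd tp by simp
  moreover have "\<not> dop c t (ODelete l)"
  proof
    assume "dop c t (ODelete l)"
    then have "ODelete l \<in> set (ops t)" using dop_lt by blast
    then show False using ODelete_ops OInsert_ops tp(4) by fastforce
  qed
  ultimately have "dop c t (OInsert l)" by (simp add: wdone_def)
  then have cx: "created c x" using tp by (auto simp: created_def)
  have ca: "created c a" using anc_created[OF id cx a] .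
  have nfa: "\<not> freed c a"
  proof
    assume "freed c a"
    then obtain X where X: "dop c X OFree" "a \<in> DE X k" by (auto simp: freed_def)
    have dl: "a \<in> DR X (lvl a)" "1 \<le> lvl a" using DE_lvl[OF X(2)] by auto
    have aX: "a \<in> LS X (lvl a)" using dl(1) DR_char by blast
    have g: "hasd (sg X) \<and> gd (sg X) \<le> lvl a \<and> lvl a \<le> k" using dl(1) dR_guard by (auto simp: DR_def)
    have al: "lvl a \<le> l" "a \<in> LS M (lvl a)" using ancs_LS[OF x a] by auto
    have Xd: "txs ! X = Del (sg X)" using OFree_ops dop_lt[OF X(1)] by blast
    have Xl: "X < length txs" using dop_lt[OF X(1)] it by (auto simp: inv_thr_def)
    show False
    proof (cases "X < M")
      case True
      obtain ta pa where ta: "a = Nd ta (lvl a) pa" "ta < X" using LS_node[OF aX dl(2)] by blast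
      have "a \<notin> LS (Suc X) (lvl a)" using LS_Suc_Del[OF Xl Xd] dl(1) by simp
      then have "a \<notin> LS M (lvl a)" using LS_persist[of ta "lvl a" pa "Suc X" M] ta True by simp
      then show False using al by simp
    next
      case False
      have lk: "l \<le> k" using LS_le_k[OF x l1] .
      have "ODelete l \<in> set (ops X)" using ODelete_ops_iff[OF Xd] g al lk by simp
      moreover have "dop c X (ODelete l)"
        using dop_before2[OF it X(1) \<open>ODelete l \<in> set (ops X)\<close>] lk by simp
      ultimately show False using nf False by simp
    qed
  qed
  show "tree c a = Some (nodeof a)" using id ca nfa unfolding inv_data_def by simp
qed

lemma bt_ok: "(\<forall>a\<in>ancs x. T a = Some (nodeof a)) \<Longrightarrow> x \<in> LS M l \<Longrightarrow> bt l T x = Some (idpath x)"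
proof (induction l arbitrary: x)
  case 0 then show ?case by (simp add: LS_0)
next
  case (Suc l)
  obtain t p where tp: "x = Nd t (Suc l) p" "p \<in> LS M l" using LS_node[OF Suc.prems(2)] by auto
  have Tx: "T x = Some (nodeof x)" using Suc.prems(1) tp(1) by simp
  have "\<forall>a\<in>ancs p. T a = Some (nodeof a)" using Suc.prems(1) tp(1) by simp
  then have "bt l T p = Some (idpath p)" using Suc.IH tp(2) by blast
  then show ?case using Tx tp(1) by (simp add: nodeof_def)
qed

lemma key_odd: assumes "key x = 2 * l + 1" shows "x = ORead l"
proof (cases x)
  case (ORead l') then show ?thesis using assms by simp
next
  case (OInsert i) then have "2 * i = 2 * l + 1" using assms by simp
  then have False by presburger
  then show ?thesis by simp
next
  case (ODelete i) then have "2 * i = 2 * l + 1" using assms by simp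
  then have False by presburger
  then show ?thesis by simp
next
  case OFree then have "2 * k + 2 = 2 * l + 1" using assms by simp
  then have False by presburger
  then show ?thesis by simp
qed

lemma pred_read:
  assumes it: "inv_thr c" and s: "thr c t = Some s" and top: "tops s = x # OInsert i # rest" and i: "i \<noteq> 1"
  shows "x = ORead (i - 1)"
proof -
  have srt: "sorted_wrt (\<lambda>a b. key a < key b) (x # OInsert i # rest)" using sorted_tops[OF it s] top by simp
  have oi: "OInsert i \<in> set (ops t)" using tops_sub[OF it s] top by auto
  have ins: "txs ! t = Ins (sg t)" and mi: "matches (sg t) i" "1 \<le> i" "i \<le> k" using OInsert_ops[OF oi] by auto
  have i2: "2 \<le> i" using mi(2) i by simp
  have ro: "ORead (i - 1) \<in> set (ops t)" using ORead_ops_iff[OF ins] mi i2 by simp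
  have kx: "key x < 2 * i" using srt by simp
  have kr: "key (ORead (i - 1)) = 2 * i - 1" using i2 by simp
  show ?thesis
  proof (rule ccontr)
    assume ne: "x \<noteq> ORead (i - 1)"
    have "ORead (i - 1) \<notin> set rest" using srt kr by auto
    then have nt: "ORead (i - 1) \<notin> set (tops s)" using ne top by auto
    obtain p where p: "tops s = drop p (ops t)" using thr_drop[OF it s] by blast
    have xin: "x \<in> set (drop p (ops t))" using top p by (metis list.set_intros(1))
    have "\<not> key x < key (ORead (i - 1))"
      using drop_sorted_after[OF sorted_ops xin ro] nt p by auto
    then have "key x = 2 * i - 1" using kx kr by simp
    then have "x = ORead (i - 1)" using key_odd[of x "i - 1"] i2 by (simp add: algebra_simps)
    then show False using ne by simp
  qed
qed

lemma first_insert: "txs ! t = Ins \<sigma> \<Longrightarrow> ops t = OInsert i # rest \<Longrightarrow> i = 1"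
proof (rule ccontr)
  assume ins: "txs ! t = Ins \<sigma>" and o: "ops t = OInsert i # rest" and i: "i \<noteq> 1"
  have oi: "OInsert i \<in> set (ops t)" using o by simp
  have mi: "matches \<sigma> i" "1 \<le> i" "i \<le> k" using OInsert_ops_iff[OF ins] oi by auto
  have "ORead (i - 1) \<in> set (ops t)" using ORead_ops_iff[OF ins] mi i by simp
  moreover have "sorted_wrt (\<lambda>a b. key a < key b) (OInsert i # rest)" using sorted_ops o by metis
  ultimately show False using o i mi by auto
qed

lemma next_after_read:
  assumes it: "inv_thr c" and s: "thr c t = Some s" and top: "tops s = ORead l # OInsert i # rest" and i: "i \<noteq> 1"
  shows "i = Suc l"
proof -
  have "OInsert i \<in> set (ops t)" using tops_sub[OF it s] top by auto
  then have "1 \<le> i" using OInsert_ops by blast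
  then show ?thesis using pred_read[OF it s top i] i by auto
qed

lemma no_ins_ins:
  assumes it: "inv_thr c" and s: "thr c t = Some s" and top: "tops s = OInsert i # OInsert i' # rest" and i: "i' \<noteq> 1"
  shows False
  using pred_read[OF it s top i] by simp

lemma del_done_before:
  assumes it: "inv_thr c" and s: "thr c t = Some s" and top: "tops s = ODelete j # rest"
  shows "dop c t (ODelete l) \<longleftrightarrow> ODelete l \<in> set (ops t) \<and> l < j"
proof
  assume d: "dop c t (ODelete l)"
  have "ODelete l \<in> set (ops t)" using dop_lt[OF d] by simp
  moreover have "l < j"
  proof (rule ccontr)
    assume "\<not> l < j"
    then have "l = j \<or> j < l" by auto
    then show False
    proof
      assume "l = j" then show False using not_dop_next[OF it s top] d by simp
    next
      assume "j < l" then show False using not_dop_after[OF it s top \<open>ODelete l \<in> set (ops t)\<close>] d by simp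
    qed
  qed
  ultimately show "ODelete l \<in> set (ops t) \<and> l < j" by simp
next
  assume "ODelete l \<in> set (ops t) \<and> l < j"
  then show "dop c t (ODelete l)" using dop_before[OF it s top] by simp
qed

lemma DE_ops: "txs ! t = Del \<sigma> \<Longrightarrow> DE t J = \<Union>{DR t l | l. ODelete l \<in> set (ops t) \<and> l \<le> J}"
proof -
  assume d: "txs ! t = Del \<sigma>"
  have sg: "sg t = \<sigma>" using d by (simp add: sg_def)
  show ?thesis
  proof (rule set_eqI)
    fix a
    show "a \<in> DE t J \<longleftrightarrow> a \<in> \<Union>{DR t l | l. ODelete l \<in> set (ops t) \<and> l \<le> J}"
    proof
      assume "a \<in> DE t J"
      then obtain l where l: "1 \<le> l" "l \<le> J" "a \<in> DR t l" unfolding DE_def DR_def dE_char by blast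
      then have "hasd \<sigma> \<and> gd \<sigma> \<le> l \<and> l \<le> k" using dR_guard sg by (auto simp: DR_def)
      then have "ODelete l \<in> set (ops t)" using ODelete_ops_iff[OF d] by simp
      then show "a \<in> \<Union>{DR t l | l. ODelete l \<in> set (ops t) \<and> l \<le> J}" using l by blast
    next
      assume "a \<in> \<Union>{DR t l | l. ODelete l \<in> set (ops t) \<and> l \<le> J}"
      then obtain l where l: "ODelete l \<in> set (ops t)" "l \<le> J" "a \<in> DR t l" by blast
      have "1 \<le> l" using ODelete_ops_iff[OF d] l(1) gd by fastforce
      then show "a \<in> DE t J" using l unfolding DE_def DR_def dE_char by blast
    qed
  qed
qed

end

context ctx
begin

lemma il_W1: "inv_lock c \<Longrightarrow> wl c j = filter (\<lambda>r. \<not> granted c j r) (REQ j (nlaunch c))"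
  by (simp add: inv_lock_def)

lemma il_W2: assumes "inv_lock c" "r \<in> set (REQ j (nlaunch c))" "r' \<in> set (REQ j (nlaunch c))" "bef r r'" "granted c j r'"
  shows "granted c j r"
proof -
  from assms(1) have "\<forall>j r r'. r \<in> set (REQ j (nlaunch c)) \<longrightarrow> r' \<in> set (REQ j (nlaunch c)) \<longrightarrow> bef r r'
        \<longrightarrow> granted c j r' \<longrightarrow> granted c j r" unfolding inv_lock_def by (elim conjE) assumption
  then show ?thesis using assms(2-5) by blast
qed

lemma il_W3: assumes "inv_lock c" "(t, m) \<in> set (REQ j (nlaunch c))" "(t', m') \<in> set (REQ j (nlaunch c))"
    "bef (t, m) (t', m')" "granted c j (t', m')" "m = Ex \<or> m' = Ex"
  shows "dop c t (reqop t j m)"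
proof -
  from assms(1) have "\<forall>j t m t' m'. (t, m) \<in> set (REQ j (nlaunch c)) \<longrightarrow> (t', m') \<in> set (REQ j (nlaunch c))
        \<longrightarrow> bef (t, m) (t', m') \<longrightarrow> granted c j (t', m') \<longrightarrow> (m = Ex \<or> m' = Ex) \<longrightarrow> dop c t (reqop t j m)"
    unfolding inv_lock_def by (elim conjE) assumption
  then show ?thesis using assms(2-6) by blast
qed

lemma il_H: assumes "inv_lock c" "(t, m) \<in> hold c j"
  shows "\<exists>s rest. thr c t = Some s \<and> tops s = reqop t j m # rest"
proof -
  from assms(1) have "\<forall>j t m. (t, m) \<in> hold c j \<longrightarrow> (\<exists>s rest. thr c t = Some s \<and> tops s = reqop t j m # rest)"
    unfolding inv_lock_def by (elim conjE) assumption
  then show ?thesis using assms(2) by blast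
qed

lemma inv_lockI:
  assumes "\<And>j. wl c j = filter (\<lambda>r. \<not> granted c j r) (REQ j (nlaunch c))"
    "\<And>j r r'. r \<in> set (REQ j (nlaunch c)) \<Longrightarrow> r' \<in> set (REQ j (nlaunch c)) \<Longrightarrow> bef r r' \<Longrightarrow> granted c j r' \<Longrightarrow> granted c j r"
    "\<And>j t m t' m'. (t, m) \<in> set (REQ j (nlaunch c)) \<Longrightarrow> (t', m') \<in> set (REQ j (nlaunch c))
        \<Longrightarrow> bef (t, m) (t', m') \<Longrightarrow> granted c j (t', m') \<Longrightarrow> m = Ex \<or> m' = Ex \<Longrightarrow> dop c t (reqop t j m)"
    "\<And>j t m. (t, m) \<in> hold c j \<Longrightarrow> \<exists>s rest. thr c t = Some s \<and> tops s = reqop t j m # rest"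
  shows "inv_lock c"
  unfolding inv_lock_def
  apply (intro conjI allI impI)
     apply (rule assms(1))
    apply (rule assms(2); assumption)
   apply (rule assms(3); assumption)
  apply (rule assms(4); assumption)
  done

lemma dop_upd:
  assumes it: "inv_thr c" and s: "thr c t = Some s" and top: "tops s = oo # rest"
    and th: "thr c' = (thr c)(t \<mapsto> s')" and ts: "tops s' = rest" and nl: "nlaunch c' = nlaunch c"
  shows "dop c' t' x \<longleftrightarrow> dop c t' x \<or> (t' = t \<and> x = oo)"
proof (cases "t' = t")
  case True
  have nf: "oo \<in> set (ops t)" "oo \<notin> set rest" using next_facts[OF it s top] by auto
  have tl: "t < nlaunch c" using thr_lt[OF it s] .
  show ?thesis using True nf tl th ts nl s top by (auto simp: dop_def)
next
  case False
  then show ?thesis using th nl by (simp add: dop_def)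
qed

lemma inv_thr_upd:
  assumes it: "inv_thr c" and s: "thr c t = Some s" and top: "tops s = oo # rest"
    and th: "thr c' = (thr c)(t \<mapsto> s')" and ts: "tops s' = rest" and te: "tedge s' = tedge s"
    and nl: "nlaunch c' = nlaunch c"
  shows "inv_thr c'"
proof -
  obtain p where p: "tops s = drop p (ops t)" using thr_drop[OF it s] by blast
  have "rest = drop (Suc p) (ops t)" using p top by (metis drop_Suc list.sel(3) tl_drop)
  then have "\<exists>p. tops s' = drop p (ops t)" using ts by blast
  moreover have "tedge s' = sg t" using te thr_edge[OF it s] by simp
  moreover have "t < nlaunch c" using thr_lt[OF it s] .
  ultimately show ?thesis using it th nl unfolding inv_thr_def by auto
qed

lemma reqop_inj: "reqop t j m \<in> set (ops t) \<Longrightarrow> reqop t j m = reqop t j' m' \<Longrightarrow> j = j' \<and> m = m'"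
  using reqop_lock by (metis Pair_inject option.inject)

lemma granted_upd:
  assumes it: "inv_thr c" and il: "inv_lock c" and s: "thr c t = Some s" and top: "tops s = oo # rest"
    and th: "thr c' = (thr c)(t \<mapsto> s')" and ts: "tops s' = rest" and nl: "nlaunch c' = nlaunch c"
    and hc: "hold c' = (hold c)(jj := hold c jj - {(t, mm)})"
    and cond: "(oo = reqop t jj mm \<and> (t, mm) \<in> hold c jj) \<or> oo = OFree"
  shows "granted c' j r \<longleftrightarrow> granted c j r"
proof -
  obtain t1 m1 where r: "r = (t1, m1)" by (cases r)
  have du: "dop c' t1 x \<longleftrightarrow> dop c t1 x \<or> (t1 = t \<and> x = oo)" for x using dop_upd[OF it s top th ts nl] .
  have oin: "oo \<in> set (ops t)" using next_facts[OF it s top] by simp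
  show ?thesis
  proof (cases "oo = OFree")
    case True
    have "(t, mm) \<notin> hold c jj"
    proof
      assume "(t, mm) \<in> hold c jj"
      then obtain s2 rest2 where "thr c t = Some s2" "tops s2 = reqop t jj mm # rest2"
        using il_H[OF il] by blast
      then show False using s top True reqop_ne_OFree by simp
    qed
    then have "hold c' = hold c" using hc by auto
    then show ?thesis using du r True reqop_ne_OFree by (simp add: granted_def)
  next
    case False
    from cond have c1: "oo = reqop t jj mm \<and> (t, mm) \<in> hold c jj"
    proof
      assume "oo = OFree" then show ?thesis using False by simp
    qed
    then have c1: "oo = reqop t jj mm" "(t, mm) \<in> hold c jj" by simp_all
    show ?thesis
    proof (cases "t1 = t \<and> reqop t j m1 = oo")
      case True
      have e: "reqop t jj mm = reqop t j m1" using True c1(1) by metis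
      have rin: "reqop t jj mm \<in> set (ops t)" using oin c1(1) by metis
      have jm: "jj = j \<and> mm = m1" using reqop_inj[OF rin e] .
      have g1: "granted c j r" using r c1(2) True jm by (simp add: granted_def)
      have "dop c' t oo" using du True by blast
      then have g2: "granted c' j r" using r True by (simp add: granted_def)
      show ?thesis using g1 g2 by simp
    next
      case nt: False
      have d1: "dop c' t1 (reqop t1 j m1) \<longleftrightarrow> dop c t1 (reqop t1 j m1)" using du nt by blast
      have h1: "(t1, m1) \<in> hold c' j \<longleftrightarrow> (t1, m1) \<in> hold c j \<and> \<not> (j = jj \<and> (t1, m1) = (t, mm))"
        using hc by auto
      have h2: "j = jj \<and> (t1, m1) = (t, mm) \<Longrightarrow> dop c' t1 (reqop t1 j m1)"
      proof -
        assume a: "j = jj \<and> (t1, m1) = (t, mm)"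
        then have "reqop t1 j m1 = oo" using c1(1) by simp
        then show ?thesis using du a by blast
      qed
      have h3: "j = jj \<and> (t1, m1) = (t, mm) \<Longrightarrow> (t1, m1) \<in> hold c j" using c1(2) by simp
      show ?thesis unfolding r granted_def fst_conv snd_conv using d1 h1 h2 h3 by blast
    qed
  qed
qed

lemma lock_upd:
  assumes it: "inv_thr c" and il: "inv_lock c" and s: "thr c t = Some s" and top: "tops s = oo # rest"
    and th: "thr c' = (thr c)(t \<mapsto> s')" and ts: "tops s' = rest" and nl: "nlaunch c' = nlaunch c"
    and wlq: "wl c' = wl c"
    and hc: "hold c' = (hold c)(jj := hold c jj - {(t, mm)})"
    and cond: "(oo = reqop t jj mm \<and> (t, mm) \<in> hold c jj) \<or> oo = OFree"
  shows "inv_lock c'"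
proof -
  have g: "\<And>j. granted c' j = granted c j"
    using granted_upd[OF it il s top th ts nl hc cond] by blast
  have du: "\<And>t1 x. dop c t1 x \<Longrightarrow> dop c' t1 x" using dop_upd[OF it s top th ts nl] by blast
  have oin: "oo \<in> set (ops t)" using next_facts[OF it s top] by simp
  have H: "\<forall>j t1 m. (t1, m) \<in> hold c' j \<longrightarrow> (\<exists>s rest. thr c' t1 = Some s \<and> tops s = reqop t1 j m # rest)"
  proof (intro allI impI)
    fix j t1 m assume h: "(t1, m) \<in> hold c' j"
    then have h1: "(t1, m) \<in> hold c j" "\<not> (j = jj \<and> (t1, m) = (t, mm))" using hc by (auto split: if_splits)
    obtain s2 rest2 where s2: "thr c t1 = Some s2" "tops s2 = reqop t1 j m # rest2"
      using il_H[OF il h1(1)] by blast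
    show "\<exists>s rest. thr c' t1 = Some s \<and> tops s = reqop t1 j m # rest"
    proof (cases "t1 = t")
      case True
      then have "oo = reqop t j m" using s2 s top by simp
      then show ?thesis
      proof (cases "oo = OFree")
        case True then show ?thesis using \<open>oo = reqop t j m\<close> reqop_ne_OFree by simp
      next
        case False
        then have "oo = reqop t jj mm" using cond by simp
        then have "j = jj \<and> m = mm" using reqop_inj[of t j m jj mm] \<open>oo = reqop t j m\<close> oin by simp
        then show ?thesis using h1(2) True by simp
      qed
    next
      case False then show ?thesis using s2 th by simp
    qed
  qed
  show ?thesis
  proof (rule inv_lockI)
    fix j show "wl c' j = filter (\<lambda>r. \<not> granted c' j r) (REQ j (nlaunch c'))"
      using il_W1[OF il] g nl wlq by simp
  next
    fix j r r' assume "r \<in> set (REQ j (nlaunch c'))" "r' \<in> set (REQ j (nlaunch c'))" "bef r r'" "granted c' j r'"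
    then show "granted c' j r" using il_W2[OF il] g nl by simp
  next
    fix j t1 m t' m' assume "(t1, m) \<in> set (REQ j (nlaunch c'))" "(t', m') \<in> set (REQ j (nlaunch c'))"
      "bef (t1, m) (t', m')" "granted c' j (t', m')" "m = Ex \<or> m' = Ex"
    then show "dop c' t1 (reqop t1 j m)" using il_W3[OF il] g nl du by simp
  next
    fix j t1 m assume "(t1, m) \<in> hold c' j"
    then show "\<exists>s rest. thr c' t1 = Some s \<and> tops s = reqop t1 j m # rest" using H by blast
  qed
qed

subsection \<open>Initial state, launch, grant\<close>

lemma Inv_init: "Inv conf_init"
proof -
  have "inv_thr conf_init" by (simp add: inv_thr_def conf_init_def)
  moreover have "inv_lock conf_init" by (simp add: inv_lock_def conf_init_def REQ_def)
  moreover have "inv_data conf_init"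
  proof -
    have d: "\<not> dop conf_init t x" for t x by (simp add: dop_def conf_init_def)
    have "\<forall>j. 1 \<le> j \<longrightarrow> (\<exists>N \<le> nlaunch conf_init. lst conf_init j = LS N j \<and> (\<forall>t. wr t j \<longrightarrow> (t < N \<longleftrightarrow> wdone conf_init t j)))"
      using d by (auto simp: conf_init_def wdone_def intro!: exI[of _ 0])
    moreover have "\<forall>n. tree conf_init n = (if created conf_init n \<and> \<not> freed conf_init n then Some (nodeof n) else None)"
      using d by (simp add: created_def conf_init_def)
    moreover have "\<forall>t i p. created conf_init (Nd t i p) \<longrightarrow> 2 \<le> i \<longrightarrow> created conf_init p"
      using d by (simp add: created_def)
    moreover have "\<forall>t s. thr conf_init t = Some s \<longrightarrow> thread_ok conf_init t s" by (simp add: conf_init_def)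
    ultimately show ?thesis unfolding inv_data_def by blast
  qed
  ultimately show ?thesis by (simp add: Inv_def)
qed

lemma thread_ok_cong: "(\<And>x. dop c' t x = dop c t x) \<Longrightarrow> thread_ok c' t s = thread_ok c t s"
  by (simp add: thread_ok_def split: txn.split)

lemma Inv_launch:
  assumes inv: "Inv c" and nl: "nlaunch c < length txs"
    and c': "c' = c\<lparr>nlaunch := Suc (nlaunch c),
                wl := (\<lambda>j. wl c j @ map (\<lambda>(j', m). (nlaunch c, m)) (filter (\<lambda>(j', m). j' = j) (List.map_filter op_lock (txn_ops k matches (txs ! nlaunch c))))),
                thr := (thr c)(nlaunch c \<mapsto> init_thr (txn_edge (txs ! nlaunch c)) (txn_ops k matches (txs ! nlaunch c)))\<rparr>"
  shows "Inv c'"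
proof -
  define n where "n = nlaunch c"
  have it: "inv_thr c" and il: "inv_lock c" and id: "inv_data c" using inv by (auto simp: Inv_def)
  have thrn: "thr c n = None" using it unfolding inv_thr_def n_def by simp
  have thr': "thr c' = (thr c)(n \<mapsto> init_thr (sg n) (ops n))" using c' by (simp add: n_def sg_def ops_def)
  have nl': "nlaunch c' = Suc n" using c' n_def by simp
  have dopn: "\<not> dop c n x" for x by (simp add: dop_def n_def)
  have dopeq: "dop c' t x = dop c t x" for t x
  proof (cases "t = n")
    case True then show ?thesis using thr' nl' dopn by (simp add: dop_def init_thr_def)
  next
    case False then show ?thesis using thr' nl' by (auto simp: dop_def n_def)
  qed
  have holdeq: "hold c' = hold c" using c' by simp
  have nhold: "(n, m) \<notin> hold c j" for m j
    using il_H[OF il, of n m j] thrn by auto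
  have geq: "granted c' j r = granted c j r" for j r
    using dopeq holdeq by (simp add: granted_def)
  have gn: "\<not> granted c j (n, m)" for j m using dopn nhold by (simp add: granted_def)
  have REQs: "set (REQ j n) \<subseteq> {r. fst r < n}" for j by (auto simp: set_REQ)
  have "inv_thr c'"
    using it nl thr' nl' thrn unfolding inv_thr_def n_def
    by (auto simp: init_thr_def intro: exI[of _ 0])
  moreover have "inv_lock c'"
  proof -
    have wl': "wl c' j = wl c j @ reqs n j" for j using c' by (simp add: reqs_def n_def ops_def)
    have W1: "wl c' j = filter (\<lambda>r. \<not> granted c' j r) (REQ j (nlaunch c'))" for j
    proof -
      have "filter (\<lambda>r. \<not> granted c j r) (reqs n j) = reqs n j"
        using gn by (auto simp: set_reqs intro!: filter_True)
      then show ?thesis using il_W1[OF il, of j] wl'[of j] unfolding nl' REQ_Suc geq n_def by simp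
    qed
    have memR: "r \<in> set (REQ j (nlaunch c')) \<Longrightarrow> granted c j r \<Longrightarrow> r \<in> set (REQ j n)" for j r
      using gn by (cases r) (auto simp: nl' REQ_Suc set_reqs)
    have memR2: "r \<in> set (REQ j (nlaunch c')) \<Longrightarrow> bef r r' \<Longrightarrow> r' \<in> set (REQ j n) \<Longrightarrow> r \<in> set (REQ j n)" for j r r'
      by (cases r; cases r') (auto simp: nl' REQ_Suc set_reqs set_REQ)
    show ?thesis
    proof (rule inv_lockI)
      fix j show "wl c' j = filter (\<lambda>r. \<not> granted c' j r) (REQ j (nlaunch c'))" by (rule W1)
    next
      fix j r r' assume a: "r \<in> set (REQ j (nlaunch c'))" "r' \<in> set (REQ j (nlaunch c'))" "bef r r'" "granted c' j r'"
      have r': "r' \<in> set (REQ j n)" using memR a geq by blast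
      have r: "r \<in> set (REQ j n)" using memR2 a r' by blast
      show "granted c' j r" using il_W2[OF il, of r j r'] r r' a geq n_def by simp
    next
      fix j t m t' m' assume a: "(t, m) \<in> set (REQ j (nlaunch c'))" "(t', m') \<in> set (REQ j (nlaunch c'))"
        "bef (t, m) (t', m')" "granted c' j (t', m')" "m = Ex \<or> m' = Ex"
      have r': "(t', m') \<in> set (REQ j n)" using memR a geq by blast
      have r: "(t, m) \<in> set (REQ j n)" using memR2 a r' by blast
      show "dop c' t (reqop t j m)" using il_W3[OF il, of t m j t' m'] r r' a geq dopeq n_def by simp
    next
      fix j t m assume "(t, m) \<in> hold c' j"
      then have h: "(t, m) \<in> hold c j" using holdeq by simp
      then have "t \<noteq> n" using nhold by blast
      then show "\<exists>s rest. thr c' t = Some s \<and> tops s = reqop t j m # rest"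
        using il_H[OF il h] thr' by simp
    qed
  qed
  moreover have "inv_data c'"
  proof -
    have wd: "wdone c' t j = wdone c t j" for t j by (simp add: wdone_def dopeq)
    have cr: "created c' x = created c x" for x by (simp add: created_def dopeq)
    have fr: "freed c' x = freed c x" for x by (simp add: freed_def dopeq)
    have D1: "\<forall>j. 1 \<le> j \<longrightarrow> (\<exists>N \<le> nlaunch c'. lst c' j = LS N j \<and> (\<forall>t. wr t j \<longrightarrow> (t < N \<longleftrightarrow> wdone c' t j)))"
    proof (intro allI impI)
      fix j :: nat assume "1 \<le> j"
      then obtain N where "N \<le> nlaunch c" "lst c j = LS N j" "\<forall>t. wr t j \<longrightarrow> (t < N \<longleftrightarrow> wdone c t j)"
        using id unfolding inv_data_def by blast
      then show "\<exists>N \<le> nlaunch c'. lst c' j = LS N j \<and> (\<forall>t. wr t j \<longrightarrow> (t < N \<longleftrightarrow> wdone c' t j))"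
        using c' wd by (intro exI[of _ N]) auto
    qed
    have T: "\<forall>t s. thr c' t = Some s \<longrightarrow> thread_ok c' t s"
    proof (intro allI impI)
      fix t s assume ts: "thr c' t = Some s"
      show "thread_ok c' t s"
      proof (cases "t = n")
        case False
        then have "thr c t = Some s" using ts thr' by simp
        then show ?thesis using id thread_ok_cong[of c' t c s] dopeq unfolding inv_data_def by simp
      next
        case True
        then have s: "s = init_thr (sg n) (ops n)" using ts thr' by simp
        show ?thesis
        proof (cases "txs ! n")
          case (Ins \<sigma>)
          have "\<forall>i rest. ops n = OInsert i # rest \<longrightarrow> i \<noteq> 1 \<longrightarrow> False"
            using first_insert[OF Ins] by blast
          then show ?thesis using Ins s True dopn dopeq by (auto simp: thread_ok_def init_thr_def)
        next
          case (Del \<sigma>)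
          then show ?thesis using s True dopn dopeq by (auto simp: thread_ok_def init_thr_def)
        qed
      qed
    qed
    show ?thesis using id D1 T unfolding inv_data_def cr fr using c' by simp
  qed
  ultimately show ?thesis by (simp add: Inv_def)
qed

lemma filter_remove_head: "distinct xs \<Longrightarrow> filter P xs = x # w \<Longrightarrow> filter (\<lambda>r. P r \<and> r \<noteq> x) xs = w"
proof (induction xs)
  case Nil then show ?case by simp
next
  case (Cons y ys)
  show ?case
  proof (cases "P y")
    case True
    then have "y = x" "w = filter P ys" using Cons.prems by auto
    moreover have "x \<notin> set ys" using Cons.prems(1) \<open>y = x\<close> by simp
    ultimately show ?thesis using True by (auto intro: filter_cong)
  next
    case False then show ?thesis using Cons by simp
  qed
qed

lemma bef_asym: "bef a b \<Longrightarrow> \<not> bef b a"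
  by (cases a; cases b) auto

lemma Inv_grant:
  assumes inv: "Inv c" and s: "thr c t = Some s" and top: "tops s = op # rest" and lk: "op_lock op = Some (j, m)"
    and w: "wl c j = (t, m) # w" and cp: "compat m (hold c j)"
    and c': "c' = c\<lparr>wl := (wl c)(j := w), hold := (hold c)(j := insert (t, m) (hold c j))\<rparr>"
  shows "Inv c'"
proof -
  have it: "inv_thr c" and il: "inv_lock c" and id: "inv_data c" using inv by (auto simp: Inv_def)
  have oin: "op \<in> set (ops t)" using next_facts[OF it s top] by simp
  have opr: "op = reqop t j m" using lock_reqop[OF oin, of j m] lk by simp
  have tl: "t < nlaunch c" using thr_lt[OF it s] .
  define n where "n = nlaunch c"
  have dopeq: "dop c' = dop c" using c' by (auto simp: dop_def intro!: ext)
  have W1c: "wl c j = filter (\<lambda>r. \<not> granted c j r) (REQ j n)" using il_W1[OF il] n_def by blast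
  have ng: "\<not> granted c j (t, m)"
  proof -
    have "(t, m) \<in> set (wl c j)" using w by simp
    then show ?thesis using W1c by simp
  qed
  have geq: "granted c' j' r \<longleftrightarrow> granted c j' r \<or> (j' = j \<and> r = (t, m))" for j' r
    using c' dopeq by (auto simp: granted_def)
  have before_granted: "r \<in> set (REQ j n) \<Longrightarrow> bef r (t, m) \<Longrightarrow> granted c j r" for r
  proof (rule ccontr)
    assume r: "r \<in> set (REQ j n)" "bef r (t, m)" "\<not> granted c j r"
    have srt: "sorted_wrt bef (wl c j)" using W1c sorted_REQ sorted_wrt_filter by metis
    have "r \<in> set (wl c j)" using W1c r by simp
    moreover have "r \<noteq> (t, m)" using r(2) bef_irrefl by blast
    ultimately have "r \<in> set w" using w by simp
    then have "bef (t, m) r" using srt w by simp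
    then show False using bef_asym r(2) by blast
  qed
  have "inv_lock c'"
  proof -
    have W1: "wl c' j' = filter (\<lambda>r. \<not> granted c' j' r) (REQ j' (nlaunch c'))" for j'
    proof (cases "j' = j")
      case True
      have "filter (\<lambda>r. \<not> granted c j r \<and> r \<noteq> (t, m)) (REQ j n) = w"
        using filter_remove_head[OF distinct_REQ] W1c w by simp
      then show ?thesis using True c' geq n_def by simp
    next
      case False
      then show ?thesis using il_W1[OF il, of j'] c' geq by simp
    qed
    have W2: "\<forall>j' r r'. r \<in> set (REQ j' (nlaunch c')) \<longrightarrow> r' \<in> set (REQ j' (nlaunch c')) \<longrightarrow> bef r r'
        \<longrightarrow> granted c' j' r' \<longrightarrow> granted c' j' r"
    proof (intro allI impI)
      fix j' r r' assume a: "r \<in> set (REQ j' (nlaunch c'))" "r' \<in> set (REQ j' (nlaunch c'))" "bef r r'" "granted c' j' r'"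
      show "granted c' j' r"
      proof (cases "granted c j' r'")
        case True then have "granted c j' r" using il_W2[OF il, of r j' r'] a c' by simp
        then show ?thesis using geq by simp
      next
        case False
        then have "j' = j" "r' = (t, m)" using a(4) geq by auto
        then show ?thesis using before_granted a c' geq n_def by auto
      qed
    qed
    have W3: "\<forall>j' t0 m0 t1 m1. (t0, m0) \<in> set (REQ j' (nlaunch c')) \<longrightarrow> (t1, m1) \<in> set (REQ j' (nlaunch c'))
        \<longrightarrow> bef (t0, m0) (t1, m1) \<longrightarrow> granted c' j' (t1, m1) \<longrightarrow> (m0 = Ex \<or> m1 = Ex) \<longrightarrow> dop c' t0 (reqop t0 j' m0)"
    proof (intro allI impI)
      fix j' t0 m0 t1 m1
      assume a: "(t0, m0) \<in> set (REQ j' (nlaunch c'))" "(t1, m1) \<in> set (REQ j' (nlaunch c'))"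
        "bef (t0, m0) (t1, m1)" "granted c' j' (t1, m1)" "m0 = Ex \<or> m1 = Ex"
      show "dop c' t0 (reqop t0 j' m0)"
      proof (cases "granted c j' (t1, m1)")
        case True then show ?thesis using il_W3[OF il, of t0 m0 j' t1 m1] a c' dopeq by simp
      next
        case False
        then have jt: "j' = j" "(t1, m1) = (t, m)" using a(4) geq by auto
        then have g0: "granted c j (t0, m0)" using before_granted a c' n_def by auto
        show ?thesis
        proof (cases "dop c t0 (reqop t0 j m0)")
          case True then show ?thesis using jt dopeq by simp
        next
          case False
          then have h0: "(t0, m0) \<in> hold c j" using g0 by (simp add: granted_def)
          from cp have "hold c j = {} \<or> (m = Sh \<and> (\<forall>(t', m') \<in> hold c j. m' = Sh))" by (simp add: compat_def)
          then have "m = Sh \<and> m0 = Sh" using h0 by auto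
          then show ?thesis using a(5) jt by simp
        qed
      qed
    qed
    have H: "\<forall>j' t0 m0. (t0, m0) \<in> hold c' j' \<longrightarrow> (\<exists>s rest. thr c' t0 = Some s \<and> tops s = reqop t0 j' m0 # rest)"
    proof (intro allI impI)
      fix j' t0 m0 assume h: "(t0, m0) \<in> hold c' j'"
      show "\<exists>s rest. thr c' t0 = Some s \<and> tops s = reqop t0 j' m0 # rest"
      proof (cases "j' = j \<and> (t0, m0) = (t, m)")
        case True then show ?thesis using s top opr c' by auto
      next
        case False
        then have "(t0, m0) \<in> hold c j'" using h c' by (auto split: if_splits)
        then show ?thesis using il_H[OF il] c' by simp
      qed
    qed
    show ?thesis
    proof (rule inv_lockI)
      fix j' show "wl c' j' = filter (\<lambda>r. \<not> granted c' j' r) (REQ j' (nlaunch c'))" by (rule W1)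
    next
      fix j' r r' assume "r \<in> set (REQ j' (nlaunch c'))" "r' \<in> set (REQ j' (nlaunch c'))" "bef r r'" "granted c' j' r'"
      then show "granted c' j' r" using W2 by blast
    next
      fix j' t0 m0 t1 m1 assume "(t0, m0) \<in> set (REQ j' (nlaunch c'))" "(t1, m1) \<in> set (REQ j' (nlaunch c'))"
        "bef (t0, m0) (t1, m1)" "granted c' j' (t1, m1)" "m0 = Ex \<or> m1 = Ex"
      then show "dop c' t0 (reqop t0 j' m0)" using W3 by blast
    next
      fix j' t0 m0 assume "(t0, m0) \<in> hold c' j'"
      then show "\<exists>s rest. thr c' t0 = Some s \<and> tops s = reqop t0 j' m0 # rest" using H by blast
    qed
  qed
  moreover have "inv_thr c'" using it c' unfolding inv_thr_def by simp
  moreover have "inv_data c'"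
  proof -
    have wd: "wdone c' = wdone c" unfolding wdone_def[abs_def] dopeq by (rule refl)
    have cr: "created c' = created c" unfolding created_def[abs_def] dopeq by (rule refl)
    have fr: "freed c' = freed c" unfolding freed_def[abs_def] dopeq by (rule refl)
    have tk: "thread_ok c' = thread_ok c" unfolding thread_ok_def[abs_def] dopeq by (rule refl)
    show ?thesis using id c' unfolding inv_data_def wd cr fr tk by simp
  qed
  ultimately show ?thesis by (simp add: Inv_def)
qed

end

context ctx
begin

lemma do_op_read: "tops s = ORead j # rest \<Longrightarrow> do_op k join_ok t s c =
   c\<lparr>thr := (thr c)(t \<mapsto> s\<lparr>tops := rest, trd := {(n, bt j (tree c) n) | n. n \<in> lst c j}\<rparr>)\<rparr>"
  by (simp add: do_op_def)

lemma do_op_insert: "tops s = OInsert i # rest \<Longrightarrow>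
   NW = {(p, m). (p, Some m) \<in> (if i = 1 then {(Root, Some [])} else trd s) \<and> join_ok m (tedge s)} \<Longrightarrow>
   do_op k join_ok t s c = c\<lparr>tree := (\<lambda>n. case n of Nd t' i' p \<Rightarrow> (if t' = t \<and> i' = i \<and> (\<exists>m. (p, m) \<in> NW)
                              then Some \<lparr>ned = tedge s, npar = p\<rparr> else tree c n) | Root \<Rightarrow> tree c n),
       lst := (lst c)(i := lst c i \<union> {Nd t i p | p m. (p, m) \<in> NW}),
       thr := (thr c)(t \<mapsto> s\<lparr>tops := rest,
                     tadd := tadd s \<union> (if i = k then {m @ [tedge s] | p m. (p, m) \<in> NW} else {})\<rparr>)\<rparr>"
proof -
  assume a1: "tops s = OInsert i # rest"
    and a2: "NW = {(p, m). (p, Some m) \<in> (if i = 1 then {(Root, Some [])} else trd s) \<and> join_ok m (tedge s)}"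
  show ?thesis unfolding a2 using a1 by (simp add: do_op_def Let_def)
qed

lemma do_op_delete: "tops s = ODelete j # rest \<Longrightarrow>
   R = {n \<in> lst c j. case tree c n of None \<Rightarrow> False | Some nd \<Rightarrow> ned nd = tedge s \<or> npar nd \<in> tE s} \<Longrightarrow>
   do_op k join_ok t s c = c\<lparr>lst := (lst c)(j := lst c j - R),
       thr := (thr c)(t \<mapsto> s\<lparr>tops := rest, tE := tE s \<union> R,
                     trem := trem s \<union> (if j = k then bt k (tree c) ` R else {})\<rparr>)\<rparr>"
proof -
  assume a1: "tops s = ODelete j # rest"
    and a2: "R = {n \<in> lst c j. case tree c n of None \<Rightarrow> False | Some nd \<Rightarrow> ned nd = tedge s \<or> npar nd \<in> tE s}"
  show ?thesis unfolding a2 using a1 by (simp add: do_op_def Let_def)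
qed

lemma do_op_free: "tops s = OFree # rest \<Longrightarrow> do_op k join_ok t s c =
   c\<lparr>tree := (\<lambda>n. if n \<in> tE s then None else tree c n), thr := (thr c)(t \<mapsto> s\<lparr>tops := rest\<rparr>)\<rparr>"
  by (simp add: do_op_def)

lemma id_D1: "inv_data c \<Longrightarrow> 1 \<le> j \<Longrightarrow> \<exists>N \<le> nlaunch c. lst c j = LS N j \<and> (\<forall>t. wr t j \<longrightarrow> (t < N \<longleftrightarrow> wdone c t j))"
  unfolding inv_data_def by blast
lemma id_D2: "inv_data c \<Longrightarrow> tree c n = (if created c n \<and> \<not> freed c n then Some (nodeof n) else None)"
  unfolding inv_data_def by blast
lemma id_CL: "inv_data c \<Longrightarrow> created c (Nd t i p) \<Longrightarrow> 2 \<le> i \<Longrightarrow> created c p"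
  unfolding inv_data_def by blast
lemma id_T: "inv_data c \<Longrightarrow> thr c t = Some s \<Longrightarrow> thread_ok c t s"
  unfolding inv_data_def by blast

lemma inv_dataI:
  assumes "\<And>j. 1 \<le> j \<Longrightarrow> \<exists>N \<le> nlaunch c. lst c j = LS N j \<and> (\<forall>t. wr t j \<longrightarrow> (t < N \<longleftrightarrow> wdone c t j))"
    "\<And>n. tree c n = (if created c n \<and> \<not> freed c n then Some (nodeof n) else None)"
    "\<And>t i p. created c (Nd t i p) \<Longrightarrow> 2 \<le> i \<Longrightarrow> created c p"
    "\<And>t s. thr c t = Some s \<Longrightarrow> thread_ok c t s"
  shows "inv_data c"
  unfolding inv_data_def using assms by blast

lemma thread_ok_Ins: "txs ! t = Ins \<sigma> \<Longrightarrow> thread_ok c t s \<longleftrightarrow>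
   (tE s = {} \<and> trem s = {} \<and> tadd s = (if dop c t (OInsert k) then TADD t else {})
        \<and> (\<forall>i rest. tops s = OInsert i # rest \<longrightarrow> i \<noteq> 1 \<longrightarrow> trd s = RD t (i - 1)))"
  by (simp add: thread_ok_def)

lemma thread_ok_Del: "txs ! t = Del \<sigma> \<Longrightarrow> thread_ok c t s \<longleftrightarrow>
   (tadd s = {} \<and> tE s = (\<Union>{DR t j | j. dop c t (ODelete j)})
        \<and> trem s = (if dop c t (ODelete k) then Some ` idpath ` DR t k else {}))"
  by (simp add: thread_ok_def)

lemma T_other: "inv_data c \<Longrightarrow> thr c' = (thr c)(t \<mapsto> s1) \<Longrightarrow> (\<And>t' x. t' \<noteq> t \<Longrightarrow> dop c' t' x = dop c t' x)
   \<Longrightarrow> thr c' t' = Some s' \<Longrightarrow> t' \<noteq> t \<Longrightarrow> thread_ok c' t' s'"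
proof -
  assume a: "inv_data c" "thr c' = (thr c)(t \<mapsto> s1)" "\<And>t' x. t' \<noteq> t \<Longrightarrow> dop c' t' x = dop c t' x"
    "thr c' t' = Some s'" "t' \<noteq> t"
  have "thr c t' = Some s'" using a(2,4,5) by simp
  then have "thread_ok c t' s'" using id_T[OF a(1)] by blast
  then show ?thesis using thread_ok_cong[of c' t' c s'] a(3,5) by simp
qed

subsection \<open>Read\<close>

lemma data_read:
  assumes inv: "Inv c" and s: "thr c t = Some s" and top: "tops s = ORead l # rest" and h: "(t, Sh) \<in> hold c l"
    and c': "c' = c\<lparr>thr := (thr c)(t \<mapsto> s1), hold := H'\<rparr>"
    and s1: "s1 = s\<lparr>tops := rest, trd := {(n, bt l (tree c) n) | n. n \<in> lst c l}\<rparr>"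
  shows "inv_data c'"
proof -
  have it: "inv_thr c" and il: "inv_lock c" and id: "inv_data c" using inv by (auto simp: Inv_def)
  have ro: "ORead l \<in> set (ops t)" using next_facts[OF it s top] by simp
  have ins: "txs ! t = Ins (sg t)" and l1: "1 \<le> l" using ORead_ops[OF ro] by auto
  have tl: "t < nlaunch c" using thr_lt[OF it s] .
  have rv: "\<forall>t'. wr t' l \<longrightarrow> (wdone c t' l \<longleftrightarrow> t' < Suc t)" using rview[OF inv s top h] .
  have lstv: "lst c l = LS (Suc t) l" using D1_view[OF id l1 rv] .
  have nd: "\<not> dop c t (ORead l)" using not_dop_next[OF it s top] .
  have prs: "\<forall>a\<in>ancs x. tree c a = Some (nodeof a)" if x: "x \<in> LS (Suc t) l" for x
  proof (rule pres[OF inv x l1])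
    show "\<forall>t'. wr t' l \<longrightarrow> t' < Suc t \<longrightarrow> wdone c t' l" using rv by blast
    show "\<forall>X. Suc t \<le> X \<longrightarrow> ODelete l \<in> set (ops X) \<longrightarrow> \<not> dop c X (ODelete l)"
    proof (intro allI impI notI)
      fix X assume X: "Suc t \<le> X" "ODelete l \<in> set (ops X)" "dop c X (ODelete l)"
      have "txs ! X = Del (sg X)" using ODelete_ops[OF X(2)] by simp
      then have rX: "reqop X l Ex = ODelete l" by (simp add: reqop_def)
      have "granted c l (X, Ex)" using X(3) rX by (simp add: granted_def)
      then have "dop c t (reqop t l Sh)"
        using order_O1[OF il _ _ _ _ _, of t X l Sh Ex] X ro rX dop_lt[OF X(3)] by (simp add: reqop_Sh)
      then show False using nd by (simp add: reqop_Sh)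
    qed
  qed
  have rdeq: "{(n, bt l (tree c) n) | n. n \<in> lst c l} = RD t l"
  proof -
    have "\<And>n. n \<in> LS (Suc t) l \<Longrightarrow> bt l (tree c) n = Some (idpath n)" using bt_ok prs by blast
    then show ?thesis unfolding lstv RD_def by auto
  qed
  have thr': "thr c' = (thr c)(t \<mapsto> s1)" using c' by simp
  have du: "dop c' t' x \<longleftrightarrow> dop c t' x \<or> (t' = t \<and> x = ORead l)" for t' x
    using dop_upd[OF it s top thr'] s1 c' by simp
  have wd: "wdone c' = wdone c" using du by (auto simp: wdone_def intro!: ext)
  have cr: "created c' = created c" using du by (auto simp: created_def intro!: ext)
  have fr: "freed c' = freed c" using du by (auto simp: freed_def intro!: ext)
  show ?thesis
  proof (rule inv_dataI)
    fix j :: nat assume "1 \<le> j"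
    then show "\<exists>N \<le> nlaunch c'. lst c' j = LS N j \<and> (\<forall>t. wr t j \<longrightarrow> (t < N \<longleftrightarrow> wdone c' t j))"
      using id_D1[OF id] c' wd by simp
  next
    fix n show "tree c' n = (if created c' n \<and> \<not> freed c' n then Some (nodeof n) else None)"
      using id_D2[OF id] c' cr fr by simp
  next
    fix t0 i p assume "created c' (Nd t0 i p)" "2 \<le> i"
    then show "created c' p" using id_CL[OF id] cr by simp
  next
    fix t' s' assume ts: "thr c' t' = Some s'"
    show "thread_ok c' t' s'"
    proof (cases "t' = t")
      case False
      then show ?thesis using T_other[OF id thr' _ ts] du by blast
    next
      case True
      then have ss: "s' = s1" using ts thr' by simp
      have tk: "thread_ok c t s" using id_T[OF id s] .
      have "\<forall>i rest'. rest = OInsert i # rest' \<longrightarrow> i \<noteq> 1 \<longrightarrow> RD t l = RD t (i - 1)"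
        using next_after_read[OF it s] top by fastforce
      moreover have "dop c' t (OInsert k) = dop c t (OInsert k)" using du by simp
      ultimately have "thread_ok c' t s1"
        using tk[unfolded thread_ok_Ins[OF ins]] s1 rdeq unfolding thread_ok_Ins[OF ins] by simp
      then show ?thesis using ss True by simp
    qed
  qed
qed


subsection \<open>Insert\<close>

lemma LS_Suc_ins_lvl:
  assumes tl: "t < length txs" and ins: "txs ! t = Ins \<sigma>" and oi: "OInsert i \<in> set (ops t)"
  shows "LS (Suc t) i = LS t i \<union> {Nd t i p | p. p \<in> NEWP t i}"
proof -
  have mi: "matches \<sigma> i" "1 \<le> i" "i \<le> k" using OInsert_ops_iff[OF ins] oi by auto
  obtain i' where i': "i = Suc i'" using mi(2) by (cases i) auto
  have sg: "sg t = \<sigma>" using ins by (simp add: sg_def)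
  have e: "LS (Suc t) = insL t (LS t)" using LS_Suc_Ins[OF tl ins] .
  have "LS (Suc t) i = LS t i \<union> {Nd t i p | p. p \<in> insL t (LS t) i' \<and> join_ok (idpath p) (sg t)}"
    using e i' mi sg by simp
  moreover have "NEWP t i = {p \<in> insL t (LS t) i'. join_ok (idpath p) (sg t)}"
    using e i' by (simp add: NEWP_def)
  ultimately show ?thesis by auto
qed

lemma data_insert:
  assumes inv: "Inv c" and s: "thr c t = Some s" and top: "tops s = OInsert i # rest" and h: "(t, Ex) \<in> hold c i"
    and NW: "NW = {(p, m). (p, Some m) \<in> (if i = 1 then {(Root, Some [])} else trd s) \<and> join_ok m (tedge s)}"
    and TR: "TR = (\<lambda>n. case n of Nd t' i' p \<Rightarrow> (if t' = t \<and> i' = i \<and> (\<exists>m. (p, m) \<in> NW)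
                              then Some \<lparr>ned = tedge s, npar = p\<rparr> else tree c n) | Root \<Rightarrow> tree c n)"
    and c': "c' = c\<lparr>tree := TR, lst := (lst c)(i := lst c i \<union> {Nd t i p | p m. (p, m) \<in> NW}), thr := (thr c)(t \<mapsto> s1), hold := H'\<rparr>"
    and s1: "s1 = s\<lparr>tops := rest, tadd := tadd s \<union> (if i = k then {m @ [tedge s] | p m. (p, m) \<in> NW} else {})\<rparr>"
  shows "inv_data c'"
proof -
  have it: "inv_thr c" and il: "inv_lock c" and id: "inv_data c" using inv by (auto simp: Inv_def)
  have oi: "OInsert i \<in> set (ops t)" using next_facts[OF it s top] by simp
  have ins: "txs ! t = Ins (sg t)" and mi: "matches (sg t) i" "1 \<le> i" "i \<le> k" using OInsert_ops[OF oi] by auto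
  have te: "tedge s = sg t" using thr_edge[OF it s] .
  have tl: "t < nlaunch c" using thr_lt[OF it s] .
  have tlen: "t < length txs" using tl it by (auto simp: inv_thr_def)
  have nd: "\<not> dop c t (OInsert i)" using not_dop_next[OF it s top] .
  have tk: "thread_ok c t s" using id_T[OF id s] .
  have src: "(if i = 1 then {(Root, Some [])} else trd s) = RD t (i - 1)"
  proof (cases "i = 1")
    case True then show ?thesis by (simp add: RD_def LS_0)
  next
    case False
    then show ?thesis using tk[unfolded thread_ok_Ins[OF ins]] top by simp
  qed
  have NWe: "NW = {(p, idpath p) | p. p \<in> NEWP t i}"
    unfolding NW src te by (auto simp: RD_def NEWP_def)
  have NW1: "(\<exists>m. (p, m) \<in> NW) \<longleftrightarrow> p \<in> NEWP t i" for p using NWe by auto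
  have NW2: "{Nd t i p | p m. (p, m) \<in> NW} = {Nd t i p | p. p \<in> NEWP t i}" using NWe by auto
  have NW3: "i = k \<Longrightarrow> {m @ [tedge s] | p m. (p, m) \<in> NW} = TADD t" using NWe te by (auto simp: TADD_def)
  have rqi: "reqop t i Ex = OInsert i" using ins by (simp add: reqop_def)
  have wv: "\<forall>t'. wr t' i \<longrightarrow> (wdone c t' i \<longleftrightarrow> t' < t)" using wview[OF inv s _ h] top rqi by simp
  have lstv: "lst c i = LS t i" using D1_view[OF id mi(2) wv] .
  have LSs: "LS (Suc t) i = LS t i \<union> {Nd t i p | p. p \<in> NEWP t i}" using LS_Suc_ins_lvl[OF tlen ins oi] .
  have thr': "thr c' = (thr c)(t \<mapsto> s1)" using c' by simp
  have du: "dop c' t' x \<longleftrightarrow> dop c t' x \<or> (t' = t \<and> x = OInsert i)" for t' x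
    using dop_upd[OF it s top thr'] s1 c' by simp
  have wd: "wdone c' t' j \<longleftrightarrow> wdone c t' j \<or> (t' = t \<and> j = i)" for t' j using du by (auto simp: wdone_def)
  have cr: "created c' x \<longleftrightarrow> created c x \<or> (\<exists>p. x = Nd t i p \<and> p \<in> NEWP t i)" for x
    using du by (auto simp: created_def)
  have fr: "freed c' = freed c" using du by (auto simp: freed_def intro!: ext)
  have newnf: "\<not> freed c (Nd t i p)" for p
  proof
    assume "freed c (Nd t i p)"
    then obtain X where X: "dop c X OFree" "Nd t i p \<in> DE X k" by (auto simp: freed_def)
    have dl: "Nd t i p \<in> DR X i" using DE_lvl[OF X(2)] by simp
    have aX: "Nd t i p \<in> LS X i" using dl DR_char by blast
    have tX: "t < X" using LS_node[OF aX mi(2)] by auto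
    have g: "hasd (sg X) \<and> gd (sg X) \<le> i \<and> i \<le> k" using dl dR_guard by (auto simp: DR_def)
    have Xd: "txs ! X = Del (sg X)" using OFree_ops dop_lt[OF X(1)] by blast
    have od: "ODelete i \<in> set (ops X)" using ODelete_ops_iff[OF Xd] g by simp
    have "dop c X (ODelete i)" using dop_before2[OF it X(1) od] mi by simp
    moreover have "reqop X i Ex = ODelete i" using Xd by (simp add: reqop_def)
    ultimately have "granted c i (X, Ex)" by (simp add: granted_def)
    then have "dop c t (reqop t i Ex)"
      using order_O1[OF il tX, of i Ex Ex] oi rqi od \<open>reqop X i Ex = ODelete i\<close> dop_lt[OF X(1)] by simp
    then show False using nd rqi by simp
  qed
  have newnc: "\<not> created c (Nd t i p)" for p using nd by (simp add: created_def)
  show ?thesis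
  proof (rule inv_dataI)
    fix j :: nat assume j1: "1 \<le> j"
    show "\<exists>N \<le> nlaunch c'. lst c' j = LS N j \<and> (\<forall>t. wr t j \<longrightarrow> (t < N \<longleftrightarrow> wdone c' t j))"
    proof (cases "j = i")
      case True
      have "lst c' j = LS (Suc t) j" using c' True NW2 lstv LSs by simp
      moreover have "\<forall>t'. wr t' j \<longrightarrow> (t' < Suc t \<longleftrightarrow> wdone c' t' j)" using wv wd True by auto
      moreover have "Suc t \<le> nlaunch c'" using tl c' by simp
      ultimately show ?thesis by blast
    next
      case False
      then show ?thesis using id_D1[OF id j1] c' wd by simp
    qed
  next
    fix n show "tree c' n = (if created c' n \<and> \<not> freed c' n then Some (nodeof n) else None)"
    proof (cases n)
      case Root
      have "\<not> created c Root" by (simp add: created_def)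
      then show ?thesis using id_D2[OF id, of n] c' TR Root cr by simp
    next
      case (Nd t0 i0 p0)
      show ?thesis
      proof (cases "t0 = t \<and> i0 = i \<and> p0 \<in> NEWP t i")
        case True
        have "TR n = Some (nodeof n)" using TR Nd True NW1 te by (simp add: nodeof_def)
        then show ?thesis using c' True Nd cr fr newnf by simp
      next
        case False
        have "TR n = tree c n" using TR Nd False NW1 by auto
        moreover have "created c' n = created c n" using cr Nd False by auto
        ultimately show ?thesis using id_D2[OF id, of n] c' fr by simp
      qed
    qed
  next
    fix t0 i0 p0 assume cp: "created c' (Nd t0 i0 p0)" and i2: "2 \<le> i0"
    show "created c' p0"
    proof (cases "created c (Nd t0 i0 p0)")
      case True then show ?thesis using id_CL[OF id True i2] cr by simp
    next
      case False
      then have new: "t0 = t" "i0 = i" "p0 \<in> NEWP t i" using cp cr by auto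
      have pl: "p0 \<in> LS (Suc t) (i - 1)" using new(3) by (simp add: NEWP_def)
      have i12: "1 \<le> i - 1" using i2 new by simp
      obtain t'' q where tq: "p0 = Nd t'' (i - 1) q" "t'' < Suc t" "OInsert (i - 1) \<in> set (ops t'')" "q \<in> NEWP t'' (i - 1)"
        using LS_node[OF pl i12] by blast
      have "dop c t'' (OInsert (i - 1))"
      proof (cases "t'' = t")
        case True
        then show ?thesis using dop_before[OF it s top] tq(3) i2 new by simp
      next
        case False
        then have tt: "t'' < t" using tq(2) by simp
        have ro: "ORead (i - 1) \<in> set (ops t)" using ORead_ops_iff[OF ins] mi i2 new by simp
        have "dop c t (ORead (i - 1))" using dop_before[OF it s top ro] i2 new by simp
        then have g: "granted c (i - 1) (t, Sh)" by (simp add: granted_def reqop_Sh)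
        have ins'': "txs ! t'' = Ins (sg t'')" using OInsert_ops[OF tq(3)] by simp
        have r'': "reqop t'' (i - 1) Ex = OInsert (i - 1)" using ins'' by (simp add: reqop_def)
        show ?thesis using order_O1[OF il tt, of "i - 1" Ex Sh] g r'' tq(3) ro tl by (simp add: reqop_Sh)
      qed
      then have "created c p0" using tq by (auto simp: created_def)
      then show ?thesis using cr by simp
    qed
  next
    fix t' s' assume ts: "thr c' t' = Some s'"
    show "thread_ok c' t' s'"
    proof (cases "t' = t")
      case False
      then show ?thesis using T_other[OF id thr' _ ts] du by blast
    next
      case True
      then have ss: "s' = s1" using ts thr' by simp
      have tk': "tE s = {} \<and> trem s = {} \<and> tadd s = (if dop c t (OInsert k) then TADD t else {})"
        using tk[unfolded thread_ok_Ins[OF ins]] by simp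
      have ni: "\<forall>i' rest'. rest = OInsert i' # rest' \<longrightarrow> i' \<noteq> 1 \<longrightarrow> False"
        using no_ins_ins[OF it s] top by blast
      have dk: "dop c' t (OInsert k) \<longleftrightarrow> dop c t (OInsert k) \<or> i = k" using du by auto
      have "tadd s1 = (if dop c' t (OInsert k) then TADD t else {})"
        using s1 tk' dk NW3 nd by auto
      then have "thread_ok c' t s1" unfolding thread_ok_Ins[OF ins] using tk' s1 ni by auto
      then show ?thesis using ss True by simp
    qed
  qed
qed

subsection \<open>Delete\<close>

lemma data_delete:
  assumes inv: "Inv c" and s: "thr c t = Some s" and top: "tops s = ODelete j # rest" and h: "(t, Ex) \<in> hold c j"
    and R: "R = {n \<in> lst c j. case tree c n of None \<Rightarrow> False | Some nd \<Rightarrow> ned nd = tedge s \<or> npar nd \<in> tE s}"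
    and c': "c' = c\<lparr>lst := (lst c)(j := lst c j - R), thr := (thr c)(t \<mapsto> s1), hold := H'\<rparr>"
    and s1: "s1 = s\<lparr>tops := rest, tE := tE s \<union> R, trem := trem s \<union> (if j = k then bt k (tree c) ` R else {})\<rparr>"
  shows "inv_data c'"
proof -
  have it: "inv_thr c" and il: "inv_lock c" and id: "inv_data c" using inv by (auto simp: Inv_def)
  have od: "ODelete j \<in> set (ops t)" using next_facts[OF it s top] by simp
  have del: "txs ! t = Del (sg t)" and g: "hasd (sg t)" "gd (sg t) \<le> j" "j \<le> k" using ODelete_ops[OF od] by auto
  have j1: "1 \<le> j" using gd[OF g(1)] g(2) by simp
  have te: "tedge s = sg t" using thr_edge[OF it s] .
  have tl: "t < nlaunch c" using thr_lt[OF it s] .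
  have tlen: "t < length txs" using tl it by (auto simp: inv_thr_def)
  have nd: "\<not> dop c t (ODelete j)" using not_dop_next[OF it s top] .
  have tk: "thread_ok c t s" using id_T[OF id s] .
  have rqd: "reqop t j Ex = ODelete j" using del by (simp add: reqop_def)
  have wv: "\<forall>t'. wr t' j \<longrightarrow> (wdone c t' j \<longleftrightarrow> t' < t)" using wview[OF inv s _ h] top rqd by simp
  have lstv: "lst c j = LS t j" using D1_view[OF id j1 wv] .
  have prs: "\<forall>a\<in>ancs x. tree c a = Some (nodeof a)" if x: "x \<in> LS t j" for x
  proof (rule pres[OF inv x j1])
    show "\<forall>t'. wr t' j \<longrightarrow> t' < t \<longrightarrow> wdone c t' j" using wv by blast
    show "\<forall>X. t \<le> X \<longrightarrow> ODelete j \<in> set (ops X) \<longrightarrow> \<not> dop c X (ODelete j)"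
    proof (intro allI impI notI)
      fix X assume X: "t \<le> X" "ODelete j \<in> set (ops X)" "dop c X (ODelete j)"
      show False
      proof (cases "X = t")
        case True then show False using nd X by simp
      next
        case False
        then have tX: "t < X" using X by simp
        have "txs ! X = Del (sg X)" using ODelete_ops[OF X(2)] by simp
        then have rX: "reqop X j Ex = ODelete j" by (simp add: reqop_def)
        have "granted c j (X, Ex)" using X(3) rX by (simp add: granted_def)
        then have "dop c t (reqop t j Ex)"
          using order_O1[OF il tX, of j Ex Ex] X od rX rqd dop_lt[OF X(3)] by simp
        then show False using nd rqd by simp
      qed
    qed
  qed
  have tEs: "tE s = DE t (j - 1)"
  proof -
    have "tE s = \<Union>{DR t l | l. dop c t (ODelete l)}" using tk[unfolded thread_ok_Del[OF del]] by simp
    also have "\<dots> = \<Union>{DR t l | l. ODelete l \<in> set (ops t) \<and> l < j}"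
      using del_done_before[OF it s top] by simp
    also have "\<dots> = \<Union>{DR t l | l. ODelete l \<in> set (ops t) \<and> l \<le> j - 1}"
    proof -
      have "ODelete l \<in> set (ops t) \<Longrightarrow> (l < j \<longleftrightarrow> l \<le> j - 1)" for l using j1 by auto
      then show ?thesis by metis
    qed
    also have "\<dots> = DE t (j - 1)" using DE_ops[OF del] by simp
    finally show ?thesis .
  qed
  have Req: "R = DR t j"
  proof -
    have "R = {n \<in> LS t j. nedof n = sg t \<or> parof n \<in> DE t (j - 1)}"
    proof -
      have "\<And>n. n \<in> LS t j \<Longrightarrow> tree c n = Some (nodeof n)" using prs by (metis ancs.simps(2) insertI1 LS_node j1)
      then show ?thesis unfolding R lstv te tEs by (auto simp: nodeof_def)
    qed
    also have "\<dots> = DR t j" using g by (simp add: DR_def dR_def dRj_def DE_def)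
    finally show ?thesis .
  qed
  have LSs: "LS (Suc t) j = LS t j - DR t j" using LS_Suc_Del[OF tlen del] by simp
  have thr': "thr c' = (thr c)(t \<mapsto> s1)" using c' by simp
  have du: "dop c' t' x \<longleftrightarrow> dop c t' x \<or> (t' = t \<and> x = ODelete j)" for t' x
    using dop_upd[OF it s top thr'] s1 c' by simp
  have wd: "wdone c' t' j' \<longleftrightarrow> wdone c t' j' \<or> (t' = t \<and> j' = j)" for t' j' using du by (auto simp: wdone_def)
  have cr: "created c' = created c" using du by (auto simp: created_def intro!: ext)
  have fr: "freed c' = freed c" using du by (auto simp: freed_def intro!: ext)
  show ?thesis
  proof (rule inv_dataI)
    fix j' :: nat assume j1': "1 \<le> j'"
    show "\<exists>N \<le> nlaunch c'. lst c' j' = LS N j' \<and> (\<forall>t. wr t j' \<longrightarrow> (t < N \<longleftrightarrow> wdone c' t j'))"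
    proof (cases "j' = j")
      case True
      have "lst c' j' = LS (Suc t) j'" using c' True lstv LSs Req by simp
      moreover have "\<forall>t'. wr t' j' \<longrightarrow> (t' < Suc t \<longleftrightarrow> wdone c' t' j')" using wv wd True by auto
      moreover have "Suc t \<le> nlaunch c'" using tl c' by simp
      ultimately show ?thesis by blast
    next
      case False
      then show ?thesis using id_D1[OF id j1'] c' wd by simp
    qed
  next
    fix n show "tree c' n = (if created c' n \<and> \<not> freed c' n then Some (nodeof n) else None)"
      using id_D2[OF id] c' cr fr by simp
  next
    fix t0 i p assume "created c' (Nd t0 i p)" "2 \<le> i"
    then show "created c' p" using id_CL[OF id] cr by simp
  next
    fix t' s' assume ts: "thr c' t' = Some s'"
    show "thread_ok c' t' s'"
    proof (cases "t' = t")
      case False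
      then show ?thesis using T_other[OF id thr' _ ts] du by blast
    next
      case True
      then have ss: "s' = s1" using ts thr' by simp
      have tk': "tadd s = {} \<and> tE s = \<Union>{DR t l | l. dop c t (ODelete l)}
          \<and> trem s = (if dop c t (ODelete k) then Some ` idpath ` DR t k else {})"
        using tk[unfolded thread_ok_Del[OF del]] by simp
      have e1: "tE s1 = \<Union>{DR t l | l. dop c' t (ODelete l)}"
      proof -
        have "{DR t l | l. dop c' t (ODelete l)} = insert (DR t j) {DR t l | l. dop c t (ODelete l)}"
          using du by auto
        then show ?thesis using s1 tk' Req by auto
      qed
      have e2: "trem s1 = (if dop c' t (ODelete k) then Some ` idpath ` DR t k else {})"
      proof (cases "j = k")
        case True
        have bt: "bt k (tree c) ` DR t k = Some ` idpath ` DR t k"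
        proof -
          have "\<And>n. n \<in> DR t k \<Longrightarrow> bt k (tree c) n = Some (idpath n)"
            using prs bt_ok DR_char True by blast
          then show ?thesis by (auto simp: image_iff)
        qed
        have "trem s = {}" using tk' nd True by simp
        then show ?thesis using s1 True du bt Req by simp
      next
        case False
        then show ?thesis using s1 tk' du by simp
      qed
      have "thread_ok c' t s1" unfolding thread_ok_Del[OF del] using e1 e2 tk' s1 by simp
      then show ?thesis using ss True by simp
    qed
  qed
qed

subsection \<open>Free\<close>

lemma data_free:
  assumes inv: "Inv c" and s: "thr c t = Some s" and top: "tops s = OFree # rest"
    and c': "c' = c\<lparr>tree := (\<lambda>n. if n \<in> tE s then None else tree c n), thr := (thr c)(t \<mapsto> s\<lparr>tops := rest\<rparr>)\<rparr>"
  shows "inv_data c'"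
proof -
  have it: "inv_thr c" and id: "inv_data c" using inv by (auto simp: Inv_def)
  have ofr: "OFree \<in> set (ops t)" using next_facts[OF it s top] by simp
  have del: "txs ! t = Del (sg t)" using OFree_ops[OF ofr] by simp
  have tk: "thread_ok c t s" using id_T[OF id s] .
  have tEs: "tE s = DE t k"
  proof -
    have "tE s = \<Union>{DR t l | l. dop c t (ODelete l)}" using tk[unfolded thread_ok_Del[OF del]] by simp
    also have "\<dots> = \<Union>{DR t l | l. ODelete l \<in> set (ops t) \<and> l \<le> k}"
    proof -
      have "dop c t (ODelete l) \<longleftrightarrow> ODelete l \<in> set (ops t) \<and> l \<le> k" for l
      proof
        assume "dop c t (ODelete l)"
        then show "ODelete l \<in> set (ops t) \<and> l \<le> k" using dop_lt ODelete_ops by blast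
      next
        assume a: "ODelete l \<in> set (ops t) \<and> l \<le> k"
        then show "dop c t (ODelete l)" using dop_before[OF it s top] by simp
      qed
      then show ?thesis by simp
    qed
    also have "\<dots> = DE t k" using DE_ops[OF del] by simp
    finally show ?thesis .
  qed
  have thr': "thr c' = (thr c)(t \<mapsto> s\<lparr>tops := rest\<rparr>)" using c' by simp
  have du: "dop c' t' x \<longleftrightarrow> dop c t' x \<or> (t' = t \<and> x = OFree)" for t' x
    using dop_upd[OF it s top thr'] c' by simp
  have wd: "wdone c' = wdone c" using du by (auto simp: wdone_def intro!: ext)
  have cr: "created c' = created c" using du by (auto simp: created_def intro!: ext)
  have fr: "freed c' x \<longleftrightarrow> freed c x \<or> x \<in> DE t k" for x using du by (auto simp: freed_def)
  show ?thesis
  proof (rule inv_dataI)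
    fix j :: nat assume "1 \<le> j"
    then show "\<exists>N \<le> nlaunch c'. lst c' j = LS N j \<and> (\<forall>t. wr t j \<longrightarrow> (t < N \<longleftrightarrow> wdone c' t j))"
      using id_D1[OF id] c' wd by simp
  next
    fix n show "tree c' n = (if created c' n \<and> \<not> freed c' n then Some (nodeof n) else None)"
      using id_D2[OF id, of n] c' cr fr tEs by simp
  next
    fix t0 i p assume "created c' (Nd t0 i p)" "2 \<le> i"
    then show "created c' p" using id_CL[OF id] cr by simp
  next
    fix t' s' assume ts: "thr c' t' = Some s'"
    show "thread_ok c' t' s'"
    proof (cases "t' = t")
      case False
      then show ?thesis using T_other[OF id thr' _ ts] du by blast
    next
      case True
      then have ss: "s' = s\<lparr>tops := rest\<rparr>" using ts thr' by simp
      have "\<And>l. dop c' t (ODelete l) = dop c t (ODelete l)" using du by simp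
      then have "thread_ok c' t (s\<lparr>tops := rest\<rparr>)"
        using tk unfolding thread_ok_Del[OF del] by simp
      then show ?thesis using ss True by simp
    qed
  qed
qed

end

context ctx
begin

lemma Inv_exec:
  assumes inv: "Inv c" and s: "thr c t = Some s" and top: "tops s = op # rest"
    and lk: "op_lock op = Some (j, m)" and h: "(t, m) \<in> hold c j"
  shows "Inv ((do_op k join_ok t s c)\<lparr>hold := (hold c)(j := hold c j - {(t, m)})\<rparr>)"
    (is "Inv ?c'")
proof -
  have it: "inv_thr c" and il: "inv_lock c" and id: "inv_data c" using inv by (auto simp: Inv_def)
  have oin: "op \<in> set (ops t)" using next_facts[OF it s top] by simp
  have opr: "op = reqop t j m" using lock_reqop[OF oin, of j m] lk by simp
  have cond: "(op = reqop t j m \<and> (t, m) \<in> hold c j) \<or> op = OFree" using opr h by simp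
  have hc: "hold ?c' = (hold c)(j := hold c j - {(t, m)})" by simp
  show ?thesis
  proof (cases op)
    case (ORead l)
    have jm: "j = l" "m = Sh" using lk ORead by auto
    define s1 where "s1 = s\<lparr>tops := rest, trd := {(n, bt l (tree c) n) | n. n \<in> lst c l}\<rparr>"
    have c': "?c' = c\<lparr>thr := (thr c)(t \<mapsto> s1), hold := (hold c)(j := hold c j - {(t, m)})\<rparr>"
      using do_op_read[of s l rest t c] top ORead s1_def by simp
    have thr': "thr ?c' = (thr c)(t \<mapsto> s1)" using c' by simp
    have "inv_thr ?c'" using inv_thr_upd[OF it s top thr'] c' s1_def by simp
    moreover have "inv_lock ?c'" using lock_upd[OF it il s top thr' _ _ _ hc cond] c' s1_def by simp
    moreover have "inv_data ?c'" using data_read[OF inv s _ _ c' s1_def] top ORead h jm by simp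
    ultimately show ?thesis by (simp add: Inv_def)
  next
    case (OInsert i)
    have jm: "j = i" "m = Ex" using lk OInsert by auto
    define NW where "NW = {(p, m). (p, Some m) \<in> (if i = 1 then {(Root, Some [])} else trd s) \<and> join_ok m (tedge s)}"
    define TR where "TR = (\<lambda>n. case n of Nd t' i' p \<Rightarrow> (if t' = t \<and> i' = i \<and> (\<exists>m. (p, m) \<in> NW)
                              then Some \<lparr>ned = tedge s, npar = p\<rparr> else tree c n) | Root \<Rightarrow> tree c n)"
    define s1 where "s1 = s\<lparr>tops := rest, tadd := tadd s \<union> (if i = k then {m @ [tedge s] | p m. (p, m) \<in> NW} else {})\<rparr>"
    have c': "?c' = c\<lparr>tree := TR, lst := (lst c)(i := lst c i \<union> {Nd t i p | p m. (p, m) \<in> NW}), thr := (thr c)(t \<mapsto> s1),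
                hold := (hold c)(j := hold c j - {(t, m)})\<rparr>"
      using do_op_insert[of s i rest NW t c, OF _ NW_def] top OInsert unfolding TR_def s1_def by simp
    have thr': "thr ?c' = (thr c)(t \<mapsto> s1)" using c' by simp
    have "inv_thr ?c'" using inv_thr_upd[OF it s top thr'] c' s1_def by simp
    moreover have "inv_lock ?c'" using lock_upd[OF it il s top thr' _ _ _ hc cond] c' s1_def by simp
    moreover have "inv_data ?c'" using data_insert[OF inv s _ _ NW_def TR_def c' s1_def] top OInsert h jm by simp
    ultimately show ?thesis by (simp add: Inv_def)
  next
    case (ODelete j')
    have jm: "j = j'" "m = Ex" using lk ODelete by auto
    define R where "R = {n \<in> lst c j'. case tree c n of None \<Rightarrow> False | Some nd \<Rightarrow> ned nd = tedge s \<or> npar nd \<in> tE s}"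
    define s1 where "s1 = s\<lparr>tops := rest, tE := tE s \<union> R, trem := trem s \<union> (if j' = k then bt k (tree c) ` R else {})\<rparr>"
    have c': "?c' = c\<lparr>lst := (lst c)(j' := lst c j' - R), thr := (thr c)(t \<mapsto> s1), hold := (hold c)(j := hold c j - {(t, m)})\<rparr>"
      using do_op_delete[of s j' rest R c t, OF _ R_def] top ODelete unfolding s1_def by simp
    have thr': "thr ?c' = (thr c)(t \<mapsto> s1)" using c' by simp
    have "inv_thr ?c'" using inv_thr_upd[OF it s top thr'] c' s1_def by simp
    moreover have "inv_lock ?c'" using lock_upd[OF it il s top thr' _ _ _ hc cond] c' s1_def by simp
    moreover have "inv_data ?c'" using data_delete[OF inv s _ _ R_def c' s1_def] top ODelete h jm by simp
    ultimately show ?thesis by (simp add: Inv_def)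
  next
    case OFree
    then show ?thesis using lk by simp
  qed
qed

lemma Inv_free:
  assumes inv: "Inv c" and s: "thr c t = Some s" and top: "tops s = OFree # rest"
  shows "Inv (do_op k join_ok t s c)" (is "Inv ?c'")
proof -
  have it: "inv_thr c" and il: "inv_lock c" and id: "inv_data c" using inv by (auto simp: Inv_def)
  have c': "?c' = c\<lparr>tree := (\<lambda>n. if n \<in> tE s then None else tree c n), thr := (thr c)(t \<mapsto> s\<lparr>tops := rest\<rparr>)\<rparr>"
    using do_op_free[OF top] .
  have thr': "thr ?c' = (thr c)(t \<mapsto> s\<lparr>tops := rest\<rparr>)" using c' by simp
  have nh: "(t, Sh) \<notin> hold c 0"
  proof
    assume "(t, Sh) \<in> hold c 0"
    then obtain s2 r2 where "thr c t = Some s2" "tops s2 = reqop t 0 Sh # r2" using il_H[OF il] by blast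
    then show False using s top reqop_ne_OFree by simp
  qed
  have hc: "hold ?c' = (hold c)(0 := hold c 0 - {(t, Sh)})" using c' nh by auto
  have "inv_thr ?c'" using inv_thr_upd[OF it s top thr'] c' by simp
  moreover have "inv_lock ?c'" using lock_upd[OF it il s top thr' _ _ _ hc] c' by simp
  moreover have "inv_data ?c'" using data_free[OF inv s top c'] .
  ultimately show ?thesis by (simp add: Inv_def)
qed

lemma Inv_step: "cstep k matches join_ok txs c c' \<Longrightarrow> Inv c \<Longrightarrow> Inv c'"
proof (induction rule: cstep.cases)
  case (launch c ops reqs)
  then show ?case using Inv_launch[of c] by simp
next
  case (grant c t s op rest j m w)
  then show ?case using Inv_grant[of c t s op rest j m w] by simp
next
  case (exec c t s op rest j m)
  then show ?case using Inv_exec[of c t s op rest j m] by simp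
next
  case (free c t s rest)
  then show ?case using Inv_free[of c t s rest] by simp
qed

lemma Inv_reach: "(cstep k matches join_ok txs)\<^sup>*\<^sup>* conf_init c \<Longrightarrow> Inv c"
proof (induction rule: rtranclp_induct)
  case base then show ?case by (rule Inv_init)
next
  case (step b c) then show ?case using Inv_step by blast
qed

lemma ans_step:
  assumes inv: "Inv c" and tlen: "t < length txs" and dn: "txn_done c t" and kp: "0 < k"
  shows "(case thr c t of None \<Rightarrow> Some ` idpath ` LS t k | Some s \<Rightarrow> (Some ` idpath ` LS t k - trem s) \<union> Some ` tadd s)
         = Some ` idpath ` LS (Suc t) k"
proof -
  have it: "inv_thr c" and id: "inv_data c" using inv by (auto simp: Inv_def)
  obtain s where s: "thr c t = Some s" "tops s = []" using dn by (auto simp: txn_done_def)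
  have dp: "dop c t x \<longleftrightarrow> x \<in> set (ops t)" for x using dop_iff[OF it s(1)] s(2) by simp
  have tk: "thread_ok c t s" using id_T[OF id s(1)] .
  show ?thesis
  proof (cases "txs ! t")
    case (Ins \<sigma>)
    have sg: "sg t = \<sigma>" using Ins by (simp add: sg_def)
    have t1: "trem s = {}" "tadd s = (if OInsert k \<in> set (ops t) then TADD t else {})"
      using tk[unfolded thread_ok_Ins[OF Ins]] dp by auto
    show ?thesis
    proof (cases "OInsert k \<in> set (ops t)")
      case True
      have LSs: "LS (Suc t) k = LS t k \<union> {Nd t k p | p. p \<in> NEWP t k}" using LS_Suc_ins_lvl[OF tlen Ins True] .
      have e1: "{Nd t k p | p. p \<in> NEWP t k} = Nd t k ` NEWP t k" by auto
      have e2: "TADD t = (\<lambda>p. idpath p @ [sg t]) ` NEWP t k" by (auto simp: TADD_def)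
      have "idpath ` {Nd t k p | p. p \<in> NEWP t k} = TADD t" unfolding e1 e2 image_image by simp
      then have "Some ` idpath ` LS (Suc t) k = Some ` idpath ` LS t k \<union> Some ` TADD t"
        unfolding LSs by (simp add: image_Un)
      then show ?thesis using s t1 True by simp
    next
      case False
      have "LS (Suc t) k = LS t k"
      proof -
        have "\<not> wr t k" using False Ins by (auto simp: wr_def ops_def mem_ins_ops)
        then show ?thesis using LS_nonwr kp by simp
      qed
      then show ?thesis using s t1 False by simp
    qed
  next
    case (Del \<sigma>)
    have sg: "sg t = \<sigma>" using Del by (simp add: sg_def)
    have t1: "tadd s = {}" "trem s = (if ODelete k \<in> set (ops t) then Some ` idpath ` DR t k else {})"
      using tk[unfolded thread_ok_Del[OF Del]] dp by auto
    have "trem s = Some ` idpath ` DR t k"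
    proof (cases "ODelete k \<in> set (ops t)")
      case True then show ?thesis using t1 by simp
    next
      case False
      then have "\<not> hasd \<sigma>" using ODelete_ops_iff[OF Del] gd by fastforce
      then have "DR t k = {}" using dR_guard sg by (auto simp: DR_def)
      then show ?thesis using t1 by simp
    qed
    moreover have LSs: "LS (Suc t) k = LS t k - DR t k" using LS_Suc_Del[OF tlen Del] by simp
    moreover have "Some ` idpath ` LS t k - Some ` idpath ` DR t k = Some ` idpath ` (LS t k - DR t k)"
    proof -
      have "\<And>x y. x \<in> LS t k \<Longrightarrow> y \<in> DR t k \<Longrightarrow> idpath x = idpath y \<Longrightarrow> x \<in> DR t k"
        using DR_char by metis
      then show ?thesis by (auto simp: image_iff) blast
    qed
    ultimately show ?thesis using s t1 by simp
  qed
qed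

lemma sc_main:
  assumes inv: "Inv c" and kp: "0 < k"
  shows "streaming_consistent k matches join_ok txs c"
  unfolding streaming_consistent_def
proof (intro allI impI)
  fix t assume tl: "t \<le> length txs" and dn: "\<forall>i<t. txn_done c i"
  have "conc_answers c t = Some ` idpath ` LS t k"
    using tl dn
  proof (induction t)
    case 0 then show ?case using kp by (simp add: conc_answers_def)
  next
    case (Suc t)
    have IH: "conc_answers c t = Some ` idpath ` LS t k" using Suc by simp
    have "conc_answers c (Suc t) = (case thr c t of None \<Rightarrow> conc_answers c t
            | Some s \<Rightarrow> (conc_answers c t - trem s) \<union> Some ` tadd s)"
      unfolding conc_answers_def by simp
    also have "\<dots> = Some ` idpath ` LS (Suc t) k"
    proof -
      have a1: "t < length txs" using Suc.prems by simp
      have a2: "txn_done c t" using Suc.prems by simp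
      show ?thesis unfolding IH by (rule ans_step[OF inv a1 a2 kp])
    qed
    finally show ?case .
  qed
  then show "conc_answers c t = Some ` ser_L k matches join_ok txs t k"
    by (simp add: ser_L_LS)
qed

end

theorem theorem6:
  fixes k :: nat and matches :: "'e \<Rightarrow> nat \<Rightarrow> bool" and join_ok :: "'e list \<Rightarrow> 'e \<Rightarrow> bool"
    and txs :: "'e txn list" and c :: "'e conf"
  assumes "0 < k"
    and "(cstep k matches join_ok txs)\<^sup>*\<^sup>* conf_init c"
  shows "streaming_consistent k matches join_ok txs c"
proof -
  interpret ctx k matches join_ok txs .
  show ?thesis using sc_main[OF Inv_reach[OF assms(2)] assms(1)] .
qed

end
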